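(* Let $\mathcal{A}$ be a state tomography algorithm that, given $n$ copies of $\rho\in\mathbb{C}^{d\times d}$ and a parameter $\varepsilon$, outputs an estimate $\widehat{\rho}$ (a quantum state) achieving infidelity $1 - F(\rho,\widehat\rho) \le \varepsilon \le 1/2$. Then letting $\rho' = \Delta_{2\varepsilon}(\widehat{\rho})$, we have $D_{KL}(\rho\|\rho') \le 16\varepsilon\,(2 + \ln(d/(2\varepsilon)))$.
   Context: The fidelity is $F(\rho,\sigma) = \|\sqrt\rho\sqrt\sigma\|_1$ (trace norm), and infidelity is $1-F(\rho,\sigma)$. For $0\le\epsilon\le 1$, the depolarizing channel is $\Delta_\epsilon(\rho) = (1-\epsilon)\rho + \epsilon I/d$. $D_{KL}(\rho\|\sigma) = \mathrm{tr}(\rho(\ln\rho-\ln\sigma))$. *)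

theory Defs
  imports "Jordan_Normal_Form.Schur_Decomposition"
begin

definition mat_trace :: "complex mat \<Rightarrow> complex" where
  "mat_trace A = (\<Sum>i<dim_row A. A $$ (i, i))"

definition unitary_mat :: "nat \<Rightarrow> complex mat \<Rightarrow> bool" where
  "unitary_mat n U \<longleftrightarrow> U \<in> carrier_mat n n \<and>
     U * mat_adjoint U = 1\<^sub>m n \<and> mat_adjoint U * U = 1\<^sub>m n"

definition diag_real :: "nat \<Rightarrow> (nat \<Rightarrow> real) \<Rightarrow> complex mat" where
  "diag_real n lam = mat n n (\<lambda>(i,j). if i = j then complex_of_real (lam i) else 0)"

definition hermitian_mat :: "complex mat \<Rightarrow> bool" where
  "hermitian_mat A \<longleftrightarrow> A \<in> carrier_mat (dim_row A) (dim_row A) \<and> mat_adjoint A = A"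

definition spectral_decomp :: "complex mat \<Rightarrow> complex mat \<Rightarrow> (nat \<Rightarrow> real) \<Rightarrow> bool" where
  "spectral_decomp A U lam \<longleftrightarrow> A \<in> carrier_mat (dim_row A) (dim_row A) \<and>
     unitary_mat (dim_row A) U \<and> A = U * diag_real (dim_row A) lam * mat_adjoint U"

definition mat_fun :: "(real \<Rightarrow> real) \<Rightarrow> complex mat \<Rightarrow> complex mat" where
  "mat_fun f A = (case (SOME (U, lam). spectral_decomp A U lam) of
     (U, lam) \<Rightarrow> U * diag_real (dim_row A) (f \<circ> lam) * mat_adjoint U)"

abbreviation mat_sqrt :: "complex mat \<Rightarrow> complex mat" where
  "mat_sqrt A \<equiv> mat_fun sqrt A"

(* matrix logarithm (applied to eigenvalues; on a zero eigenvalue the value is irrelevant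
   in tr(rho ln rho) since it is multiplied by 0, realising the convention 0 ln 0 = 0) *)
abbreviation mat_ln :: "complex mat \<Rightarrow> complex mat" where
  "mat_ln A \<equiv> mat_fun ln A"

definition psd_mat :: "complex mat \<Rightarrow> bool" where
  "psd_mat A \<longleftrightarrow> hermitian_mat A \<and>
     (\<forall>v \<in> carrier_vec (dim_row A). Im (conjugate v \<bullet> (A *\<^sub>v v)) = 0 \<and> Re (conjugate v \<bullet> (A *\<^sub>v v)) \<ge> 0)"

definition density_mat :: "nat \<Rightarrow> complex mat \<Rightarrow> bool" where
  "density_mat d \<rho> \<longleftrightarrow> \<rho> \<in> carrier_mat d d \<and> psd_mat \<rho> \<and> mat_trace \<rho> = 1"

definition trace_norm :: "complex mat \<Rightarrow> real" where
  "trace_norm A = Re (mat_trace (mat_sqrt (mat_adjoint A * A)))"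

definition fidelity :: "complex mat \<Rightarrow> complex mat \<Rightarrow> real" where
  "fidelity \<rho> \<sigma> = trace_norm (mat_sqrt \<rho> * mat_sqrt \<sigma>)"

definition depolarize :: "nat \<Rightarrow> real \<Rightarrow> complex mat \<Rightarrow> complex mat" where
  "depolarize d \<epsilon> \<rho> = complex_of_real (1 - \<epsilon>) \<cdot>\<^sub>m \<rho> + complex_of_real (\<epsilon> / real d) \<cdot>\<^sub>m 1\<^sub>m d"

definition kl_div :: "complex mat \<Rightarrow> complex mat \<Rightarrow> real" where
  "kl_div \<rho> \<sigma> = Re (mat_trace (\<rho> * (mat_ln \<rho> - mat_ln \<sigma>)))"

end

theory Submission
  imports Defs "Jordan_Normal_Form.Spectral_Radius"
begin


declare index_mult_mat(1)[simp del]

lemma adj_dims[simp]: "dim_row (mat_adjoint A) = dim_col A" "dim_col (mat_adjoint A) = dim_row A"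
  unfolding mat_adjoint_def by auto

lemma adj_index[simp]: "i < dim_col A \<Longrightarrow> j < dim_row A \<Longrightarrow> mat_adjoint A $$ (i,j) = cnj (A $$ (j,i))"
  unfolding mat_adjoint_def by (simp add: mat_of_rows_index)

lemma adj_carrier[simp]: "A \<in> carrier_mat n m \<Longrightarrow> mat_adjoint A \<in> carrier_mat m n"
  by (metis adj_dims carrier_matD carrier_matI)

lemma mult_index: "A \<in> carrier_mat n m \<Longrightarrow> B \<in> carrier_mat m p \<Longrightarrow> i < n \<Longrightarrow> j < p \<Longrightarrow>
   (A * B) $$ (i,j) = (\<Sum>l<m. A $$ (i,l) * B $$ (l,j))"
  by (auto simp: index_mult_mat scalar_prod_def lessThan_atLeast0 intro!: sum.cong)

lemma cnj_sum: "cnj (\<Sum>i\<in>S. f i) = (\<Sum>i\<in>S. cnj (f i))"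
  by (induction S rule: infinite_finite_induct) auto

lemma adj_mult: "(A::complex mat) \<in> carrier_mat n m \<Longrightarrow> B \<in> carrier_mat m p \<Longrightarrow>
   mat_adjoint (A * B) = mat_adjoint B * mat_adjoint A"
proof -
  assume A: "A \<in> carrier_mat n m" and B: "B \<in> carrier_mat m p"
  show ?thesis
  proof (rule eq_matI)
    fix i j assume "i < dim_row (mat_adjoint B * mat_adjoint A)" "j < dim_col (mat_adjoint B * mat_adjoint A)"
    hence ij: "i < p" "j < n" using A B by auto
    show "mat_adjoint (A * B) $$ (i, j) = (mat_adjoint B * mat_adjoint A) $$ (i, j)"
      using A B ij by (simp add: mult_index[OF adj_carrier[OF B] adj_carrier[OF A]] mult_index[OF A B] cnj_sum mult.commute)
  qed (use A B in auto)
qed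

lemma adj_adj[simp]: "mat_adjoint (mat_adjoint (A::complex mat)) = A"
  by (rule eq_matI) auto

lemma adj_one[simp]: "mat_adjoint (1\<^sub>m n :: complex mat) = 1\<^sub>m n"
  by (rule eq_matI) auto

lemma diag_carrier[simp]: "diag_real n a \<in> carrier_mat n n"
  by (simp add: diag_real_def)

lemma diag_dims[simp]: "dim_row (diag_real n a) = n" "dim_col (diag_real n a) = n"
  by (simp_all add: diag_real_def)

lemma diag_index[simp]: "i < n \<Longrightarrow> j < n \<Longrightarrow> diag_real n a $$ (i,j) = (if i = j then complex_of_real (a i) else 0)"
  by (simp add: diag_real_def)

lemma diag_mult_left: "X \<in> carrier_mat n m \<Longrightarrow> i < n \<Longrightarrow> j < m \<Longrightarrow>
  (diag_real n a * X) $$ (i,j) = complex_of_real (a i) * X $$ (i,j)"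
proof -
  assume X: "X \<in> carrier_mat n m" and ij: "i < n" "j < m"
  have "(diag_real n a * X) $$ (i,j) = (\<Sum>l<n. diag_real n a $$ (i,l) * X $$ (l,j))"
    by (rule mult_index[OF _ X ij]) simp
  also have "\<dots> = (\<Sum>l<n. if l = i then complex_of_real (a i) * X $$ (i,j) else 0)"
    by (rule sum.cong) (use ij in auto)
  finally show ?thesis using ij by simp
qed

lemma diag_mult_right: "X \<in> carrier_mat m n \<Longrightarrow> i < m \<Longrightarrow> j < n \<Longrightarrow>
  (X * diag_real n a) $$ (i,j) = X $$ (i,j) * complex_of_real (a j)"
proof -
  assume X: "X \<in> carrier_mat m n" and ij: "i < m" "j < n"
  have "(X * diag_real n a) $$ (i,j) = (\<Sum>l<n. X $$ (i,l) * diag_real n a $$ (l,j))"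
    by (rule mult_index[OF X _ ij]) simp
  also have "\<dots> = (\<Sum>l<n. if l = j then X $$ (i,j) * complex_of_real (a j) else 0)"
    by (rule sum.cong) (use ij in auto)
  finally show ?thesis using ij by simp
qed

lemma mat_trace_carrier: "A \<in> carrier_mat n n \<Longrightarrow> mat_trace A = (\<Sum>i<n. A $$ (i,i))"
  by (simp add: mat_trace_def)

lemma mat_trace_comm: "A \<in> carrier_mat n m \<Longrightarrow> B \<in> carrier_mat m n \<Longrightarrow> mat_trace (A * B) = mat_trace (B * A)"
  apply (simp add: mat_trace_def mult_index[of A n m B n] mult_index[of B m n A m])
  apply (subst sum.swap) apply (simp add: mult.commute)
  done

lemma mat_trace_add: "A \<in> carrier_mat n n \<Longrightarrow> B \<in> carrier_mat n n \<Longrightarrow> mat_trace (A + B) = mat_trace A + mat_trace B"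
  by (simp add: mat_trace_def sum.distrib)

lemma mat_trace_minus: "A \<in> carrier_mat n n \<Longrightarrow> B \<in> carrier_mat n n \<Longrightarrow> mat_trace (A - B) = mat_trace A - mat_trace B"
  by (simp add: mat_trace_def sum_subtractf)

lemma mat_trace_smult: "A \<in> carrier_mat n n \<Longrightarrow> mat_trace (c \<cdot>\<^sub>m A) = c * mat_trace A"
  by (simp add: mat_trace_def sum_distrib_left)

lemma mat_trace_one[simp]: "mat_trace (1\<^sub>m n) = of_nat n"
  by (simp add: mat_trace_def)

lemma trace_diag_form: assumes M: "M \<in> carrier_mat n n"
  shows "mat_trace (diag_real n a * M * diag_real n b * mat_adjoint M) =
    (\<Sum>i<n. \<Sum>j<n. complex_of_real (a i * b j * (cmod (M $$ (i,j)))\<^sup>2))"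
proof -
  have c1: "diag_real n a * M * diag_real n b \<in> carrier_mat n n" using M by auto
  have "mat_trace (diag_real n a * M * diag_real n b * mat_adjoint M) =
     (\<Sum>i<n. \<Sum>j<n. (diag_real n a * M * diag_real n b) $$ (i,j) * cnj (M $$ (i,j)))"
    using M by (simp add: mat_trace_def mult_index[OF c1 adj_carrier[OF M]])
  also have "\<dots> = (\<Sum>i<n. \<Sum>j<n. complex_of_real (a i * b j * (cmod (M $$ (i,j)))\<^sup>2))"
  proof (intro sum.cong refl)
    fix i j assume "i \<in> {..<n}" "j \<in> {..<n}"
    hence ij: "i < n" "j < n" by auto
    have "(diag_real n a * M * diag_real n b) $$ (i,j) = complex_of_real (a i) * M $$ (i,j) * complex_of_real (b j)"
    proof -
      have c0: "diag_real n a * M \<in> carrier_mat n n" using M by auto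
      have "(diag_real n a * M * diag_real n b) $$ (i,j) = (diag_real n a * M) $$ (i,j) * complex_of_real (b j)"
        by (rule diag_mult_right[OF c0 ij])
      also have "(diag_real n a * M) $$ (i,j) = complex_of_real (a i) * M $$ (i,j)"
        by (rule diag_mult_left[OF M ij])
      finally show ?thesis .
    qed
    moreover have "M $$ (i,j) * cnj (M $$ (i,j)) = complex_of_real ((cmod (M $$ (i,j)))\<^sup>2)"
      by (simp add: complex_norm_square[symmetric])
    ultimately show "(diag_real n a * M * diag_real n b) $$ (i,j) * cnj (M $$ (i,j)) =
       complex_of_real (a i * b j * (cmod (M $$ (i,j)))\<^sup>2)"
      by (simp add: algebra_simps)
  qed
  finally show ?thesis .
qed


lemma unitaryD: assumes "unitary_mat n U"
  shows "U \<in> carrier_mat n n" "U * mat_adjoint U = 1\<^sub>m n" "mat_adjoint U * U = 1\<^sub>m n"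
  using assms unfolding unitary_mat_def by auto

lemma unitary_one: "unitary_mat n (1\<^sub>m n)"
  unfolding unitary_mat_def by auto

lemma unitary_adj: "unitary_mat n U \<Longrightarrow> unitary_mat n (mat_adjoint U)"
  unfolding unitary_mat_def by auto

lemma unitary_mult: assumes U: "unitary_mat n U" and V: "unitary_mat n V"
  shows "unitary_mat n (U * V)"
proof -
  note u = unitaryD[OF U] and v = unitaryD[OF V]
  have a: "mat_adjoint (U * V) = mat_adjoint V * mat_adjoint U"
    by (rule adj_mult[OF u(1) v(1)])
  have "U * V * (mat_adjoint V * mat_adjoint U) = U * (V * (mat_adjoint V * mat_adjoint U))"
    using u v by (intro assoc_mult_mat) auto
  also have "V * (mat_adjoint V * mat_adjoint U) = (V * mat_adjoint V) * mat_adjoint U"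
    using u v by (intro assoc_mult_mat[symmetric]) auto
  also have "\<dots> = mat_adjoint U" using u v by simp
  also have "U * mat_adjoint U = 1\<^sub>m n" using u by simp
  finally have 1: "U * V * mat_adjoint (U * V) = 1\<^sub>m n" using a by simp
  have "mat_adjoint V * mat_adjoint U * (U * V) = mat_adjoint V * (mat_adjoint U * (U * V))"
    using u v by (intro assoc_mult_mat) auto
  also have "mat_adjoint U * (U * V) = (mat_adjoint U * U) * V"
    using u v by (intro assoc_mult_mat[symmetric]) auto
  also have "\<dots> = V" using u v by simp
  also have "mat_adjoint V * V = 1\<^sub>m n" using v by simp
  finally have 2: "mat_adjoint (U * V) * (U * V) = 1\<^sub>m n" using a by simp
  show ?thesis unfolding unitary_mat_def using 1 2 u v by auto
qed

lemma unitary_row_norm: assumes U: "unitary_mat n U" and i: "i < n"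
  shows "(\<Sum>j<n. (cmod (U $$ (i,j)))\<^sup>2) = 1"
proof -
  note u = unitaryD[OF U]
  have "(U * mat_adjoint U) $$ (i,i) = (\<Sum>j<n. U $$ (i,j) * cnj (U $$ (i,j)))"
    using u(1) i by (simp add: mult_index[OF u(1) adj_carrier[OF u(1)]])
  also have "\<dots> = complex_of_real (\<Sum>j<n. (cmod (U $$ (i,j)))\<^sup>2)"
    by (simp add: complex_norm_square[symmetric])
  finally have eq: "(U * mat_adjoint U) $$ (i,i) = complex_of_real (\<Sum>j<n. (cmod (U $$ (i,j)))\<^sup>2)" .
  have one: "(U * mat_adjoint U) $$ (i,i) = 1" using u(2) i by simp
  have "complex_of_real (\<Sum>j<n. (cmod (U $$ (i,j)))\<^sup>2) = 1" using eq one by metis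
  thus ?thesis by (simp only: of_real_eq_1_iff)
qed

lemma unitary_col_norm: assumes U: "unitary_mat n U" and j: "j < n"
  shows "(\<Sum>i<n. (cmod (U $$ (i,j)))\<^sup>2) = 1"
proof -
  note u = unitaryD[OF U]
  have "(mat_adjoint U * U) $$ (j,j) = (\<Sum>i<n. cnj (U $$ (i,j)) * U $$ (i,j))"
    using u(1) j by (simp add: mult_index[OF adj_carrier[OF u(1)] u(1)])
  also have "\<dots> = complex_of_real (\<Sum>i<n. (cmod (U $$ (i,j)))\<^sup>2)"
    by (simp add: complex_norm_square[symmetric] mult.commute)
  finally have eq: "(mat_adjoint U * U) $$ (j,j) = complex_of_real (\<Sum>i<n. (cmod (U $$ (i,j)))\<^sup>2)" .
  have one: "(mat_adjoint U * U) $$ (j,j) = 1" using u(3) j by simp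
  have "complex_of_real (\<Sum>i<n. (cmod (U $$ (i,j)))\<^sup>2) = 1" using eq one by metis
  thus ?thesis by (simp only: of_real_eq_1_iff)
qed

lemma unitary_conj_back: assumes U: "unitary_mat n U" and A: "A \<in> carrier_mat n n"
  shows "U * (mat_adjoint U * A * U) * mat_adjoint U = A"
proof -
  note u = unitaryD[OF U]
  have "U * (mat_adjoint U * A * U) * mat_adjoint U = U * (mat_adjoint U * A * U * mat_adjoint U)"
    using u A by (intro assoc_mult_mat) auto
  also have "mat_adjoint U * A * U * mat_adjoint U = mat_adjoint U * A * (U * mat_adjoint U)"
    using u A by (intro assoc_mult_mat) auto
  also have "\<dots> = mat_adjoint U * A" using u A by simp
  also have "U * (mat_adjoint U * A) = (U * mat_adjoint U) * A"
    using u A by (intro assoc_mult_mat[symmetric]) auto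
  finally show ?thesis using u A by simp
qed


lemma sum_delta_left: "i < (n::nat) \<Longrightarrow> (\<Sum>l<n. (if i = l then 1 else 0) * f l) = (f i :: complex)"
proof -
  assume i: "i < n"
  have "(\<Sum>l<n. (if i = l then 1 else 0) * f l) = (\<Sum>l<n. if l = i then f l else 0)"
    by (rule sum.cong) auto
  thus ?thesis using i by (simp add: sum.delta sum.delta')
qed

lemma sum_delta_right: "j < (n::nat) \<Longrightarrow> (\<Sum>l<n. f l * (if l = j then 1 else 0)) = (f j :: complex)"
proof -
  assume j: "j < n"
  have "(\<Sum>l<n. f l * (if l = j then 1 else 0)) = (\<Sum>l<n. if l = j then f l else 0)"
    by (rule sum.cong) auto
  thus ?thesis using j by (simp add: sum.delta sum.delta')
qed

lemma herm_entry: assumes "mat_adjoint (B::complex mat) = B" "B \<in> carrier_mat n n" "i < n" "j < n"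
  shows "B $$ (j,i) = cnj (B $$ (i,j))"
proof -
  have "mat_adjoint B $$ (j,i) = cnj (B $$ (i,j))" using assms(2-4) by simp
  thus ?thesis using assms(1) by simp
qed

lemma herm_conj: assumes A: "(A::complex mat) \<in> carrier_mat n n" and h: "mat_adjoint A = A" and U: "U \<in> carrier_mat n n"
  shows "mat_adjoint (mat_adjoint U * A * U) = mat_adjoint U * A * U"
proof -
  have "mat_adjoint (mat_adjoint U * A * U) = mat_adjoint U * mat_adjoint (mat_adjoint U * A)"
    using A U by (intro adj_mult) auto
  also have "mat_adjoint (mat_adjoint U * A) = mat_adjoint A * U"
    using A U by (subst adj_mult[of _ n n _ n]) auto
  also have "mat_adjoint U * (mat_adjoint A * U) = mat_adjoint U * A * U"
    using A U h by (subst assoc_mult_mat[of _ n n _ n _ n]) auto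
  finally show ?thesis .
qed

lemma sub_eigen:
  assumes B: "(B::complex mat) \<in> carrier_mat n n" and k: "k < n"
  and rowz: "\<forall>i<k. \<forall>j<n. i \<noteq> j \<longrightarrow> B $$ (i,j) = 0"
  shows "\<exists>w \<mu>. (\<forall>i<k. w i = 0) \<and> (\<exists>i<n. w i \<noteq> 0) \<and> (\<forall>i<n. (\<Sum>j<n. B $$ (i,j) * w j) = \<mu> * w i)"
proof -
  define C where "C = mat (n-k) (n-k) (\<lambda>(i,j). B $$ (i+k, j+k))"
  have Cc: "C \<in> carrier_mat (n-k) (n-k)" by (simp add: C_def)
  from spectrum_non_empty[OF Cc] k obtain \<mu> where "\<mu> \<in> spectrum C" by fastforce
  then obtain v where ev: "eigenvector C v \<mu>" unfolding spectrum_def eigenvalue_def by auto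
  hence v: "v \<in> carrier_vec (n-k)" "v \<noteq> 0\<^sub>v (n-k)" "C *\<^sub>v v = \<mu> \<cdot>\<^sub>v v"
    unfolding eigenvector_def using Cc by auto
  define w where "w i = (if i < k then 0 else v $ (i - k))" for i
  have "\<exists>l<n-k. v $ l \<noteq> 0"
  proof (rule ccontr)
    assume "\<not> ?thesis"
    hence "v = 0\<^sub>v (n-k)" using v(1) by (intro eq_vecI) auto
    thus False using v(2) by simp
  qed
  then obtain l where l: "l < n-k" "v $ l \<noteq> 0" by auto
  have nz: "\<exists>i<n. w i \<noteq> 0"
    by (rule exI[of _ "l+k"]) (use l in \<open>auto simp: w_def\<close>)
  have sumw: "(\<Sum>j<n. f j * w j) = (\<Sum>l<n-k. f (l+k) * v $ l)" for f
  proof -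
    have "(\<Sum>j<n. f j * w j) = (\<Sum>j\<in>{k..<n}. f j * w j)"
      by (rule sum.mono_neutral_right) (auto simp: w_def)
    also have "\<dots> = (\<Sum>l\<in>{..<n-k}. f (l+k) * w (l+k))"
      by (rule sum.reindex_bij_witness[of _ "\<lambda>l. l+k" "\<lambda>j. j - k"]) auto
    also have "\<dots> = (\<Sum>l<n-k. f (l+k) * v $ l)" by (simp add: w_def)
    finally show ?thesis .
  qed
  have eig: "\<forall>i<n. (\<Sum>j<n. B $$ (i,j) * w j) = \<mu> * w i"
  proof (intro allI impI)
    fix i assume i: "i < n"
    show "(\<Sum>j<n. B $$ (i,j) * w j) = \<mu> * w i"
    proof (cases "i < k")
      case True
      have "(\<Sum>j<n. B $$ (i,j) * w j) = (\<Sum>l<n-k. B $$ (i, l+k) * v $ l)" by (rule sumw)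
      also have "\<dots> = 0" using True rowz by (intro sum.neutral) auto
      finally show ?thesis using True by (simp add: w_def)
    next
      case False
      have "(\<Sum>j<n. B $$ (i,j) * w j) = (\<Sum>l<n-k. B $$ (i, l+k) * v $ l)" by (rule sumw)
      also have "\<dots> = (\<Sum>l<n-k. C $$ (i-k, l) * v $ l)"
        using False i by (intro sum.cong) (auto simp: C_def)
      also have "\<dots> = (C *\<^sub>v v) $ (i-k)"
        using False i Cc v(1) by (simp add: scalar_prod_def lessThan_atLeast0)
      also have "\<dots> = \<mu> * v $ (i-k)" using v(3) False i v(1) by simp
      finally show ?thesis using False by (simp add: w_def)
    qed
  qed
  show ?thesis using nz eig by (intro exI[of _ w] exI[of _ \<mu>]) (auto simp: w_def)
qed


lemma householder:
  assumes k: "k < n" and wk: "\<forall>i<k. w i = 0" and nrm: "(\<Sum>i<n. (cmod (w i))\<^sup>2) = 1"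
  and wreal: "Im (w k) = 0"
  shows "\<exists>V. unitary_mat n V \<and> mat_adjoint V = V \<and> (\<forall>i<n. \<forall>j<k. V $$ (i,j) = (if i = j then 1 else 0))
     \<and> (\<forall>i<n. V $$ (i,k) = w i)"
proof -
  define e :: "nat \<Rightarrow> nat \<Rightarrow> complex" where "e i j = (if i = j then 1 else 0)" for i j
  define u where "u i = e i k - w i" for i
  define s where "s = (\<Sum>i<n. (cmod (u i))\<^sup>2)"
  define c where "c = 2 / s"
  define C where "C = complex_of_real c"
  define V where "V = mat n n (\<lambda>(i,j). e i j - C * u i * cnj (u j))"
  have Vc: "V \<in> carrier_mat n n" by (simp add: V_def)
  have Vij: "V $$ (i,j) = e i j - C * u i * cnj (u j)" if "i<n" "j<n" for i j
    using that by (simp add: V_def)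
  have cC: "cnj C = C" by (simp add: C_def)
  have ee: "cnj (e i j) = e j i" for i j by (simp add: e_def)
  have adjV: "mat_adjoint V = V"
  proof (rule eq_matI)
    fix i j assume "i < dim_row V" "j < dim_col V"
    hence ij: "i < n" "j < n" using Vc by auto
    show "mat_adjoint V $$ (i,j) = V $$ (i,j)"
      using ij Vc by (simp add: Vij ee cC e_def mult.commute mult.left_commute)
  qed (use Vc in auto)
  have cs: "c * c * s - 2 * c = 0" by (cases "s = 0") (auto simp: c_def field_simps)
  have sumu: "(\<Sum>l<n. cnj (u l) * u l) = complex_of_real s"
    unfolding s_def of_real_sum by (rule sum.cong) (simp_all only: complex_norm_square mult.commute)
  have VV: "V * V = 1\<^sub>m n"
  proof (rule eq_matI)
    fix i j assume "i < dim_row (1\<^sub>m n :: complex mat)" "j < dim_col (1\<^sub>m n :: complex mat)"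
    hence ij: "i < n" "j < n" by auto
    have "(V * V) $$ (i,j) = (\<Sum>l<n. V $$ (i,l) * V $$ (l,j))" by (rule mult_index[OF Vc Vc ij])
    also have "\<dots> = (\<Sum>l<n. e i l * e l j - C * u i * (cnj (u l) * e l j) - C * cnj (u j) * (e i l * u l)
        + C * C * u i * cnj (u j) * (cnj (u l) * u l))"
      by (rule sum.cong) (use ij in \<open>auto simp: Vij algebra_simps\<close>)
    also have "\<dots> = (\<Sum>l<n. e i l * e l j) - C * u i * (\<Sum>l<n. cnj (u l) * e l j) - C * cnj (u j) * (\<Sum>l<n. e i l * u l)
        + C * C * u i * cnj (u j) * (\<Sum>l<n. cnj (u l) * u l)"
      by (simp add: sum.distrib sum_subtractf sum_distrib_left)
    also have "(\<Sum>l<n. e i l * e l j) = e i j" unfolding e_def by (rule sum_delta_left[OF ij(1)])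
    also have "(\<Sum>l<n. cnj (u l) * e l j) = cnj (u j)" unfolding e_def by (rule sum_delta_right[OF ij(2)])
    also have "(\<Sum>l<n. e i l * u l) = u i" unfolding e_def by (rule sum_delta_left[OF ij(1)])
    also note sumu
    also have "e i j - C * u i * cnj (u j) - C * cnj (u j) * u i + C * C * u i * cnj (u j) * complex_of_real s
       = e i j + u i * cnj (u j) * complex_of_real (c * c * s - 2 * c)"
      by (simp add: C_def algebra_simps)
    also have "\<dots> = e i j" unfolding cs by simp
    finally show "(V * V) $$ (i,j) = 1\<^sub>m n $$ (i,j)" using ij by (simp add: e_def sumu)
  qed (use Vc in auto)
  have unit: "unitary_mat n V" unfolding unitary_mat_def using Vc VV adjV by auto
  have u0: "u j = 0" if "j < k" for j using that wk by (simp add: u_def e_def)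
  have colj: "\<forall>i<n. \<forall>j<k. V $$ (i,j) = (if i = j then 1 else 0)"
    using k by (auto simp: Vij u0 e_def)
  have colk: "\<forall>i<n. V $$ (i,k) = w i"
  proof (cases "s = 0")
    case True
    have "\<forall>i\<in>{..<n}. (cmod (u i))\<^sup>2 = 0"
      using True unfolding s_def by (subst sum_nonneg_eq_0_iff[symmetric]) auto
    hence uz: "u i = 0" if "i < n" for i using that by auto
    show ?thesis using k by (auto simp: Vij uz) (metis u_def uz diff_eq_eq add_0)
  next
    case False
    have sq: "(cmod (u i))\<^sup>2 = (cmod (w i))\<^sup>2 + (if i = k then 1 - 2 * Re (w k) else 0)" for i
    proof (cases "i = k")
      case True
      have hu: "u i = complex_of_real (1 - Re (w k))" using True wreal by (simp add: u_def e_def complex_eq_iff)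
      have hw: "w i = complex_of_real (Re (w k))" using True wreal by (simp add: complex_eq_iff)
      have "(cmod (u i))\<^sup>2 = (1 - Re (w k))\<^sup>2" unfolding hu norm_of_real by simp
      moreover have "(cmod (w i))\<^sup>2 = (Re (w k))\<^sup>2" unfolding hw norm_of_real by simp
      ultimately show ?thesis using True by (simp add: power2_eq_square algebra_simps)
    next
      case False
      thus ?thesis by (simp add: u_def e_def norm_minus_commute)
    qed
    have "s = (\<Sum>i<n. (cmod (w i))\<^sup>2) + (\<Sum>i<n. (if i = k then 1 - 2 * Re (w k) else 0))"
      unfolding s_def sq by (simp add: sum.distrib)
    also have "\<dots> = 2 - 2 * Re (w k)" using nrm k by simp
    finally have s2: "s = 2 - 2 * Re (w k)" .
    have Ck: "C * cnj (u k) = 1"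
    proof -
      have hcu: "cnj (u k) = complex_of_real (1 - Re (w k))" using wreal by (simp add: u_def e_def complex_eq_iff)
      have c1: "c * (1 - Re (w k)) = 1" using False s2 by (simp add: c_def field_simps)
      have "C * cnj (u k) = complex_of_real (c * (1 - Re (w k)))" unfolding C_def hcu of_real_mult ..
      also have "\<dots> = 1" unfolding c1 by simp
      finally show ?thesis .
    qed
    have "V $$ (i,k) = w i" if "i < n" for i
    proof -
      have "V $$ (i,k) = e i k - u i * (C * cnj (u k))" using that k by (simp add: Vij algebra_simps)
      also have "\<dots> = w i" unfolding Ck by (simp add: u_def)
      finally show ?thesis .
    qed
    thus ?thesis by auto
  qed
  show ?thesis using unit adjV colj colk by blast
qed


lemma massoc: "A \<in> carrier_mat n n \<Longrightarrow> B \<in> carrier_mat n n \<Longrightarrow> C \<in> carrier_mat n n \<Longrightarrow> A * B * C = A * (B * C)"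
  by (rule assoc_mult_mat)

lemma sum_delta_right': "j < (n::nat) \<Longrightarrow> (\<Sum>l<n. f l * (if l = j then c else 0)) = (f j * c :: complex)"
proof -
  assume j: "j < n"
  have "(\<Sum>l<n. f l * (if l = j then c else 0)) = (\<Sum>l<n. if l = j then f l * c else 0)"
    by (rule sum.cong) auto
  thus ?thesis using j by (simp add: sum.delta)
qed

lemma spectral_induct:
  assumes A: "(A::complex mat) \<in> carrier_mat n n" and h: "mat_adjoint A = A"
  shows "k \<le> n \<Longrightarrow> \<exists>U lam. unitary_mat n U \<and>
    (\<forall>i<n. \<forall>j<k. (mat_adjoint U * A * U) $$ (i,j) = (if i = j then complex_of_real (lam j) else 0))"
proof (induction k)
  case 0
  show ?case by (intro exI[of _ "1\<^sub>m n"] exI[of _ "\<lambda>_. 0"]) (simp add: unitary_one)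
next
  case (Suc k)
  hence kn: "k < n" by simp
  from Suc obtain U lam where U: "unitary_mat n U" and
    dg: "\<forall>i<n. \<forall>j<k. (mat_adjoint U * A * U) $$ (i,j) = (if i = j then complex_of_real (lam j) else 0)"
    by auto
  note u = unitaryD[OF U]
  define B where "B = mat_adjoint U * A * U"
  have Bc: "B \<in> carrier_mat n n" using A u(1) unfolding B_def by (intro mult_carrier_mat adj_carrier) auto
  have hB: "mat_adjoint B = B" unfolding B_def by (rule herm_conj[OF A h u(1)])
  have dgB: "\<forall>i<n. \<forall>j<k. B $$ (i,j) = (if i = j then complex_of_real (lam j) else 0)"
    using dg by (simp add: B_def)
  have rowz: "\<forall>i<k. \<forall>j<n. i \<noteq> j \<longrightarrow> B $$ (i,j) = 0"
  proof (intro allI impI)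
    fix i j assume ij: "i < k" "j < n" "i \<noteq> j"
    then have "B $$ (j,i) = 0" using dgB kn by auto
    moreover have "B $$ (i,j) = cnj (B $$ (j,i))" using herm_entry[OF hB Bc, of j i] ij kn by simp
    ultimately show "B $$ (i,j) = 0" by simp
  qed
  from sub_eigen[OF Bc kn rowz] obtain w0 \<mu> where w0: "\<forall>i<k. w0 i = 0" "\<exists>i<n. w0 i \<noteq> 0"
    "\<forall>i<n. (\<Sum>j<n. B $$ (i,j) * w0 j) = \<mu> * w0 i" by blast
  define nw where "nw = sqrt (\<Sum>i<n. (cmod (w0 i))\<^sup>2)"
  have nwpos: "nw > 0"
  proof -
    from w0(2) obtain i where i: "i < n" "w0 i \<noteq> 0" by auto
    hence "(cmod (w0 i))\<^sup>2 > 0" by simp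
    moreover have "(cmod (w0 i))\<^sup>2 \<le> (\<Sum>i<n. (cmod (w0 i))\<^sup>2)" using i by (intro member_le_sum) auto
    ultimately have "(\<Sum>i<n. (cmod (w0 i))\<^sup>2) > 0" by linarith
    thus ?thesis unfolding nw_def by simp
  qed
  have nw2: "nw\<^sup>2 = (\<Sum>i<n. (cmod (w0 i))\<^sup>2)" unfolding nw_def by (simp add: sum_nonneg)
  define ph where "ph = (if w0 k = 0 then 1 else cnj (w0 k) / complex_of_real (cmod (w0 k)))"
  have phn: "cmod ph = 1" by (simp add: ph_def norm_divide)
  define w where "w i = (ph / complex_of_real nw) * w0 i" for i
  have wk: "\<forall>i<k. w i = 0" using w0(1) by (simp add: w_def)
  have nrm: "(\<Sum>i<n. (cmod (w i))\<^sup>2) = 1"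
  proof -
    have "(\<Sum>i<n. (cmod (w i))\<^sup>2) = (\<Sum>i<n. (cmod (w0 i))\<^sup>2 / nw\<^sup>2)"
      using nwpos by (intro sum.cong) (simp_all add: w_def norm_mult norm_divide phn power_divide)
    also have "\<dots> = (\<Sum>i<n. (cmod (w0 i))\<^sup>2) / nw\<^sup>2" by (simp add: sum_divide_distrib)
    also have "\<dots> = 1" using nwpos unfolding nw2[symmetric] by simp
    finally show ?thesis .
  qed
  have wreal: "Im (w k) = 0"
  proof (cases "w0 k = 0")
    case True thus ?thesis by (simp add: w_def)
  next
    case False
    have "ph * w0 k = cnj (w0 k) * w0 k / complex_of_real (cmod (w0 k))" using False by (simp add: ph_def)
    also have "cnj (w0 k) * w0 k = complex_of_real ((cmod (w0 k))\<^sup>2)" by (simp only: complex_norm_square mult.commute)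
    finally have "ph * w0 k = complex_of_real ((cmod (w0 k))\<^sup>2 / cmod (w0 k))" by simp
    hence "w k = complex_of_real ((cmod (w0 k))\<^sup>2 / cmod (w0 k) / nw)" by (simp add: w_def)
    thus ?thesis by simp
  qed
  have eigw: "\<forall>i<n. (\<Sum>j<n. B $$ (i,j) * w j) = \<mu> * w i"
  proof (intro allI impI)
    fix i assume i: "i < n"
    have "(\<Sum>j<n. B $$ (i,j) * w j) = (ph / complex_of_real nw) * (\<Sum>j<n. B $$ (i,j) * w0 j)"
      unfolding sum_distrib_left by (rule sum.cong) (simp_all add: w_def)
    also have "\<dots> = \<mu> * w i" using w0(3) i by (simp add: w_def)
    finally show "(\<Sum>j<n. B $$ (i,j) * w j) = \<mu> * w i" .
  qed
  from householder[OF kn wk nrm wreal] obtain V where V: "unitary_mat n V" "mat_adjoint V = V"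
    "\<forall>i<n. \<forall>j<k. V $$ (i,j) = (if i = j then 1 else 0)" "\<forall>i<n. V $$ (i,k) = w i" by blast
  note v = unitaryD[OF V(1)]
  have VV: "V * V = 1\<^sub>m n" using v(2) V(2) by simp
  define U' where "U' = U * V"
  have U': "unitary_mat n U'" unfolding U'_def by (rule unitary_mult[OF U V(1)])
  have aU': "mat_adjoint U' = V * mat_adjoint U" unfolding U'_def using adj_mult[OF u(1) v(1)] V(2) by simp
  have B'eq: "mat_adjoint U' * A * U' = V * (B * V)"
  proof -
    have c: "mat_adjoint U \<in> carrier_mat n n" using u(1) by simp
    have "mat_adjoint U' * A * U' = V * mat_adjoint U * A * (U * V)" unfolding aU' by (simp add: U'_def)
    also have "\<dots> = (V * mat_adjoint U) * (A * (U * V))"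
      by (rule massoc) (use u(1) v(1) A c in auto)
    also have "\<dots> = V * (mat_adjoint U * (A * (U * V)))"
      by (rule massoc) (use u(1) v(1) A c in auto)
    also have "A * (U * V) = (A * U) * V"
      by (rule massoc[symmetric]) (use u(1) v(1) A c in auto)
    also have "mat_adjoint U * ((A * U) * V) = (mat_adjoint U * (A * U)) * V"
      by (rule massoc[symmetric]) (use u(1) v(1) A c in auto)
    also have "mat_adjoint U * (A * U) = mat_adjoint U * A * U"
      by (rule massoc[symmetric]) (use u(1) v(1) A c in auto)
    also have "mat_adjoint U * A * U = B" by (simp add: B_def)
    finally show ?thesis .
  qed
  have BVc: "B * V \<in> carrier_mat n n" using Bc v(1) by simp
  have BVj: "(B * V) $$ (l,j) = (if l = j then complex_of_real (lam j) else 0)" if "l < n" "j < k" for l j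
  proof -
    have "(B * V) $$ (l,j) = (\<Sum>m<n. B $$ (l,m) * V $$ (m,j))" using that kn by (intro mult_index[OF Bc v(1)]) auto
    also have "\<dots> = (\<Sum>m<n. B $$ (l,m) * (if m = j then 1 else 0))"
      using V(3) that kn by (intro sum.cong) auto
    also have "\<dots> = B $$ (l,j)" using that kn by (intro sum_delta_right) auto
    finally show ?thesis using dgB that by simp
  qed
  have BVk: "(B * V) $$ (l,k) = \<mu> * w l" if "l < n" for l
  proof -
    have "(B * V) $$ (l,k) = (\<Sum>m<n. B $$ (l,m) * V $$ (m,k))" using that kn by (intro mult_index[OF Bc v(1)]) auto
    also have "\<dots> = (\<Sum>m<n. B $$ (l,m) * w m)" using V(4) by (intro sum.cong) auto
    finally show ?thesis using eigw that by simp
  qed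
  define lam' where "lam' = lam(k := Re \<mu>)"
  have ent: "(V * (B * V)) $$ (i,j) = (if i = j then (if j = k then \<mu> else complex_of_real (lam j)) else 0)"
    if "i < n" "j < Suc k" for i j
  proof (cases "j < k")
    case True
    have "(V * (B * V)) $$ (i,j) = (\<Sum>l<n. V $$ (i,l) * (B * V) $$ (l,j))"
      using that kn by (intro mult_index[OF v(1) BVc]) auto
    also have "\<dots> = (\<Sum>l<n. V $$ (i,l) * (if l = j then complex_of_real (lam j) else 0))"
      using BVj True by (intro sum.cong) auto
    also have "\<dots> = V $$ (i,j) * complex_of_real (lam j)" using True kn by (intro sum_delta_right') auto
    finally show ?thesis using V(3) that True by auto
  next
    case False
    hence jk: "j = k" using that by simp
    have "(V * (B * V)) $$ (i,j) = (\<Sum>l<n. V $$ (i,l) * (B * V) $$ (l,k))"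
      unfolding jk using that kn by (intro mult_index[OF v(1) BVc]) auto
    also have "\<dots> = \<mu> * (\<Sum>l<n. V $$ (i,l) * V $$ (l,k))"
      unfolding sum_distrib_left using BVk V(4) by (intro sum.cong) auto
    also have "(\<Sum>l<n. V $$ (i,l) * V $$ (l,k)) = (V * V) $$ (i,k)"
      using that kn by (intro mult_index[symmetric, OF v(1) v(1)]) auto
    also have "\<dots> = (if i = k then 1 else 0)" using VV that kn by simp
    finally show ?thesis using jk by simp
  qed
  have hB': "mat_adjoint (V * (B * V)) = V * (B * V)"
    using herm_conj[OF A h unitaryD(1)[OF U']] B'eq by simp
  have B'c: "V * (B * V) \<in> carrier_mat n n" using v(1) BVc by simp
  have "\<mu> = cnj \<mu>" using herm_entry[OF hB' B'c, of k k] ent[of k k] kn by simp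
  hence mureal: "\<mu> = complex_of_real (Re \<mu>)" by (simp add: complex_eq_iff)
  have "\<forall>i<n. \<forall>j<Suc k. (mat_adjoint U' * A * U') $$ (i,j) = (if i = j then complex_of_real (lam' j) else 0)"
    unfolding B'eq using ent mureal by (auto simp: lam'_def)
  thus ?case using U' by blast
qed

lemma spectral_exists:
  assumes A: "(A::complex mat) \<in> carrier_mat n n" and h: "mat_adjoint A = A"
  shows "\<exists>U lam. unitary_mat n U \<and> A = U * diag_real n lam * mat_adjoint U"
proof -
  from spectral_induct[OF A h, of n] obtain U lam where U: "unitary_mat n U" and
    dg: "\<forall>i<n. \<forall>j<n. (mat_adjoint U * A * U) $$ (i,j) = (if i = j then complex_of_real (lam j) else 0)"
    by auto
  note u = unitaryD[OF U]
  have "mat_adjoint U * A * U = diag_real n lam"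
    by (rule eq_matI) (use dg A u(1) in auto)
  hence "A = U * diag_real n lam * mat_adjoint U" using unitary_conj_back[OF U A] by simp
  thus ?thesis using U by blast
qed

lemma spectral_decomp_exists:
  assumes "hermitian_mat A"
  shows "\<exists>U lam. spectral_decomp A U lam"
proof -
  have A: "A \<in> carrier_mat (dim_row A) (dim_row A)" and h: "mat_adjoint A = A"
    using assms unfolding hermitian_mat_def by auto
  from spectral_exists[OF A h] show ?thesis unfolding spectral_decomp_def using A by blast
qed


lemma msq: "A \<in> carrier_mat n n \<Longrightarrow> B \<in> carrier_mat n n \<Longrightarrow> A * B \<in> carrier_mat n n"
  by (rule mult_carrier_mat)

lemma adjsq: "A \<in> carrier_mat n n \<Longrightarrow> mat_adjoint A \<in> carrier_mat n n"
  by (rule adj_carrier)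

lemma fun_unique:
  assumes U: "unitary_mat n U" and V: "unitary_mat n V"
  and eq: "U * diag_real n a * mat_adjoint U = V * diag_real n b * mat_adjoint V"
  shows "U * diag_real n (f \<circ> a) * mat_adjoint U = V * diag_real n (f \<circ> b) * mat_adjoint V"
proof -
  note u = unitaryD[OF U] and v = unitaryD[OF V]
  define M where "M = mat_adjoint U * V"
  have Mc: "M \<in> carrier_mat n n" using u v by (simp add: M_def msq adjsq)
  have da: "diag_real n a \<in> carrier_mat n n" "diag_real n b \<in> carrier_mat n n"
     "diag_real n (f \<circ> a) \<in> carrier_mat n n" "diag_real n (f \<circ> b) \<in> carrier_mat n n" by auto
  note cs = u(1) v(1) da adjsq[OF u(1)] adjsq[OF v(1)] Mc
  have "diag_real n a * M = mat_adjoint U * (U * diag_real n a * mat_adjoint U) * V"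
  proof -
    have "mat_adjoint U * (U * diag_real n a * mat_adjoint U) * V = (mat_adjoint U * U) * diag_real n a * (mat_adjoint U * V)"
      using cs by (simp add: massoc[of _ n] msq)
    thus ?thesis using u da by (simp add: M_def)
  qed
  also have "\<dots> = mat_adjoint U * (V * diag_real n b * mat_adjoint V) * V" by (simp add: eq)
  also have "\<dots> = (mat_adjoint U * V) * diag_real n b * (mat_adjoint V * V)"
    using cs by (simp add: massoc[of _ n] msq)
  also have "\<dots> = M * diag_real n b" using v da Mc by (simp add: M_def)
  finally have DM: "diag_real n a * M = M * diag_real n b" .
  have ent: "complex_of_real (a i) * M $$ (i,j) = M $$ (i,j) * complex_of_real (b j)" if "i < n" "j < n" for i j
  proof -
    have "(diag_real n a * M) $$ (i,j) = (M * diag_real n b) $$ (i,j)" using DM by simp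
    thus ?thesis using diag_mult_left[OF Mc that] diag_mult_right[OF Mc that] by simp
  qed
  have DMf: "diag_real n (f \<circ> a) * M = M * diag_real n (f \<circ> b)"
  proof (rule eq_matI)
    fix i j assume "i < dim_row (M * diag_real n (f \<circ> b))" "j < dim_col (M * diag_real n (f \<circ> b))"
    hence ij: "i < n" "j < n" using Mc by auto
    have "complex_of_real (f (a i)) * M $$ (i,j) = M $$ (i,j) * complex_of_real (f (b j))"
    proof (cases "M $$ (i,j) = 0")
      case False
      hence "a i = b j" using ent[OF ij] by (simp add: mult.commute)
      thus ?thesis by (simp add: mult.commute)
    qed simp
    thus "(diag_real n (f \<circ> a) * M) $$ (i,j) = (M * diag_real n (f \<circ> b)) $$ (i,j)"
      using diag_mult_left[OF Mc ij] diag_mult_right[OF Mc ij] by simp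
  qed (use Mc in auto)
  have UM: "U * M = V" using cs u v by (simp add: M_def massoc[of _ n, symmetric] msq)
  have MV: "M * mat_adjoint V = mat_adjoint U" using cs u v by (simp add: M_def massoc[of _ n] msq)
  have "U * diag_real n (f \<circ> a) * mat_adjoint U = U * (diag_real n (f \<circ> a) * M) * mat_adjoint V"
    using cs by (simp add: MV[symmetric] massoc[of _ n] msq)
  also have "\<dots> = (U * M) * diag_real n (f \<circ> b) * mat_adjoint V"
    using cs by (simp add: DMf massoc[of _ n] msq)
  also have "\<dots> = V * diag_real n (f \<circ> b) * mat_adjoint V" by (simp add: UM)
  finally show ?thesis .
qed

lemma mat_fun_eq:
  assumes sd: "spectral_decomp A U lam"
  shows "mat_fun f A = U * diag_real (dim_row A) (f \<circ> lam) * mat_adjoint U"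
proof -
  obtain U' lam' where sel: "(SOME p. case p of (U, lam) \<Rightarrow> spectral_decomp A U lam) = (U', lam')"
    by (cases "SOME p. case p of (U, lam) \<Rightarrow> spectral_decomp A U lam") auto
  have "\<exists>p. case p of (U, lam) \<Rightarrow> spectral_decomp A U lam" using sd by auto
  hence "case (SOME p. case p of (U, lam) \<Rightarrow> spectral_decomp A U lam) of (U, lam) \<Rightarrow> spectral_decomp A U lam"
    by (rule someI_ex)
  hence sd': "spectral_decomp A U' lam'" using sel by simp
  have mf: "mat_fun f A = U' * diag_real (dim_row A) (f \<circ> lam') * mat_adjoint U'"
    unfolding mat_fun_def sel by simp
  from sd sd' have "unitary_mat (dim_row A) U" "unitary_mat (dim_row A) U'"
    "U' * diag_real (dim_row A) lam' * mat_adjoint U' = U * diag_real (dim_row A) lam * mat_adjoint U"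
    unfolding spectral_decomp_def by auto
  from fun_unique[OF this(2,1,3)] mf show ?thesis by simp
qed


lemma ln_ge_inv: "s > 0 \<Longrightarrow> ln s \<ge> 1 - 1 / (s::real)"
proof -
  assume s: "s > 0"
  have "ln (1/s) \<le> 1/s - 1" using s by (intro ln_le_minus_one) simp
  thus ?thesis using s by (simp add: ln_div)
qed

lemma scalar_s:
  fixes s s0 :: real
  assumes s0: "0 < s0" "s0 \<le> s" "s0 \<le> 1"
  shows "- 2 * ln s \<le> 2 * (1 - s) + (3 - 4 * ln s0) * (1 - s)\<^sup>2"
proof -
  have s: "s > 0" using s0 by simp
  have lns0: "ln s0 \<le> 0" using s0 by simp
  show ?thesis
  proof (cases "s \<ge> 1")
    case True
    define t where "t = 1 / s"
    have l: "ln s \<ge> 1 - t" using ln_ge_inv[OF s] by (simp add: t_def)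
    have t1: "t \<le> 1" using True by (simp add: t_def divide_le_eq)
    define R where "R = 2 * (1 - s) + (3 - 4 * ln s0) * (1 - s)\<^sup>2"
    define Q where "Q = (s - 1)\<^sup>2 * (3 - 4 * ln s0 - 2 * t)"
    have k2: "0 \<le> Q" unfolding Q_def using t1 lns0 by (intro mult_nonneg_nonneg) auto
    have e: "R + 2 * (1 - t) = Q"
      using s by (simp add: R_def Q_def t_def field_simps power2_eq_square)
    have "- 2 * ln s \<le> R" using e k2 l by argo
    thus ?thesis by (simp add: R_def)
  next
    case False
    define u where "u = 1 - s"
    define l where "l = - ln s"
    have u: "0 < u" "u < 1" using False s by (auto simp: u_def)
    have l0: "l \<ge> 0" using False s by (simp add: l_def)
    have lu: "l \<le> u / s" using ln_ge_inv[OF s] s by (simp add: l_def u_def field_simps)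
    have ls0: "- 4 * ln s0 \<ge> 4 * l" using s0 s by (simp add: l_def)
    have main: "l * (2 - 4 * u\<^sup>2) \<le> 2 * u + 3 * u\<^sup>2"
    proof (cases "2 - 4 * u\<^sup>2 \<le> 0")
      case True
      hence "l * (2 - 4 * u\<^sup>2) \<le> 0" using l0 by (simp add: mult_nonneg_nonpos)
      moreover have "2 * u + 3 * u\<^sup>2 \<ge> 0" using u by simp
      ultimately show ?thesis by linarith
    next
      case False
      hence "l * (2 - 4 * u\<^sup>2) \<le> (u / s) * (2 - 4 * u\<^sup>2)" using lu by (intro mult_right_mono) auto
      also have "(u / s) * (2 - 4 * u\<^sup>2) \<le> 2 * u + 3 * u\<^sup>2"
      proof -
        have "(1 - s) * (2 - s) \<ge> 0" using u by (intro mult_nonneg_nonneg) (auto simp: u_def)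
        hence "2 - 4 * u\<^sup>2 \<le> s * (2 + 3 * u)" by (simp add: u_def power2_eq_square algebra_simps)
        hence "u * (2 - 4 * u\<^sup>2) \<le> u * (s * (2 + 3 * u))" using u by (intro mult_left_mono) auto
        thus ?thesis using s by (simp add: field_simps power2_eq_square)
      qed
      finally show ?thesis .
    qed
    have "(3 + 4 * l) * u\<^sup>2 \<le> (3 - 4 * ln s0) * u\<^sup>2" using ls0 by (intro mult_right_mono) auto
    moreover have "2 * l \<le> 2 * u + (3 + 4 * l) * u\<^sup>2" using main by (simp add: algebra_simps)
    ultimately show ?thesis by (simp add: l_def u_def)
  qed
qed

lemma scalar_pq:
  fixes p q \<delta> :: real
  assumes p: "0 \<le> p" "p \<le> 1" and q: "\<delta> \<le> q" and d: "0 < \<delta>" "\<delta> \<le> 1"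
  shows "p * ln p - p * ln q \<le> 2 * (p - sqrt p * sqrt q) + (3 - 2 * ln \<delta>) * (sqrt p - sqrt q)\<^sup>2"
proof (cases "p = 0")
  case True
  have "ln \<delta> \<le> 0" using d by simp
  hence "3 - 2 * ln \<delta> \<ge> 0" by linarith
  hence "(3 - 2 * ln \<delta>) * (sqrt q)\<^sup>2 \<ge> 0" by (intro mult_nonneg_nonneg) auto
  thus ?thesis using True by simp
next
  case False
  hence pp: "p > 0" using p by simp
  have qp: "q > 0" using q d by simp
  define s where "s = sqrt q / sqrt p"
  have spos: "s > 0" using pp qp by (simp add: s_def)
  have s0: "sqrt \<delta> \<le> s"
  proof -
    have "sqrt \<delta> \<le> sqrt q" using q by simp
    also have "sqrt q \<le> sqrt q / sqrt p"
      using pp p qp by (simp add: le_divide_eq real_sqrt_le_1_iff mult_left_le)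
    finally show ?thesis by (simp add: s_def)
  qed
  have sc: "- 2 * ln s \<le> 2 * (1 - s) + (3 - 4 * ln (sqrt \<delta>)) * (1 - s)\<^sup>2"
    by (rule scalar_s) (use d s0 in auto)
  have lnsd: "ln (sqrt \<delta>) = ln \<delta> / 2" using d by (simp add: ln_sqrt)
  have lns: "- 2 * ln s = ln p - ln q"
  proof -
    have "ln s = ln (sqrt q) - ln (sqrt p)" using pp qp by (simp add: s_def ln_div)
    thus ?thesis using pp qp by (simp add: ln_sqrt)
  qed
  have sq: "sqrt q = s * sqrt p" using pp by (simp add: s_def)
  have "p * ln p - p * ln q = p * (- 2 * ln s)" using lns by (simp add: algebra_simps)
  also have "\<dots> \<le> p * (2 * (1 - s) + (3 - 2 * ln \<delta>) * (1 - s)\<^sup>2)"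
    using sc lnsd pp by (intro mult_left_mono) auto
  also have "\<dots> = 2 * (p - sqrt p * sqrt q) + (3 - 2 * ln \<delta>) * (sqrt p - sqrt q)\<^sup>2"
  proof -
    have alg: "a\<^sup>2 * (2 * (1 - s) + C * (1 - s)\<^sup>2) = 2 * (a\<^sup>2 - a * (s * a)) + C * (a - s * a)\<^sup>2" for a C :: real
      by (simp add: power2_eq_square algebra_simps)
    have pp2: "p = (sqrt p)\<^sup>2" using pp by simp
    show ?thesis unfolding sq using alg[of "sqrt p" "3 - 2 * ln \<delta>"] pp2 by simp
  qed
  finally show ?thesis .
qed


lemma classical_final:
  fixes p r :: "nat \<Rightarrow> real" and B :: "nat \<Rightarrow> nat \<Rightarrow> real" and d :: nat and \<epsilon> :: real
  assumes d: "d \<ge> 1" and eps: "0 < \<epsilon>" "\<epsilon> \<le> 1/2"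
    and p0: "\<forall>i<d. p i \<ge> 0" and psum: "(\<Sum>i<d. p i) = 1"
    and r0: "\<forall>i<d. r i \<ge> 0" and rsum: "(\<Sum>i<d. r i) = 1"
    and B0: "\<forall>i<d. \<forall>j<d. B i j \<ge> 0" and Brow: "\<forall>i<d. (\<Sum>j<d. B i j) = 1"
    and Bcol: "\<forall>j<d. (\<Sum>i<d. B i j) = 1"
    and H: "(1 - \<epsilon>)\<^sup>2 \<le> (\<Sum>i<d. \<Sum>j<d. B i j * sqrt (p i) * sqrt (r j))"
  shows "(\<Sum>i<d. p i * ln (p i)) - (\<Sum>i<d. \<Sum>j<d. B i j * p i * ln ((1 - 2*\<epsilon>) * r j + 2*\<epsilon>/d))
     \<le> 16 * \<epsilon> * (2 + ln (real d / (2 * \<epsilon>)))"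
proof -
  define \<delta> where "\<delta> = 2 * \<epsilon> / d"
  define q where "q j = (1 - 2*\<epsilon>) * r j + \<delta>" for j
  define C where "C = 3 - 2 * ln \<delta>"
  have dpos: "real d > 0" using d by simp
  have \<delta>: "0 < \<delta>" "\<delta> \<le> 1" using eps d by (auto simp: \<delta>_def field_simps)
  have lnd: "ln \<delta> \<le> 0" using \<delta> by simp
  have q\<delta>: "q j \<ge> \<delta>" if "j < d" for j
    using r0 that eps by (simp add: q_def)
  have p1: "p i \<le> 1" if "i < d" for i
  proof -
    have "p i \<le> (\<Sum>i<d. p i)" using that p0 by (intro member_le_sum) auto
    thus ?thesis using psum by simp
  qed
  define G where "G = (\<Sum>i<d. \<Sum>j<d. B i j * (sqrt (p i) * sqrt (q j)))"
  have step1: "(\<Sum>i<d. p i * ln (p i)) = (\<Sum>i<d. \<Sum>j<d. B i j * (p i * ln (p i)))"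
    using Brow by (simp add: sum_distrib_right[symmetric])
  have step2: "(\<Sum>i<d. \<Sum>j<d. B i j * p i * ln (q j)) = (\<Sum>i<d. \<Sum>j<d. B i j * (p i * ln (q j)))"
    by (simp add: mult.assoc)
  have "(\<Sum>i<d. p i * ln (p i)) - (\<Sum>i<d. \<Sum>j<d. B i j * p i * ln (q j))
      = (\<Sum>i<d. \<Sum>j<d. B i j * (p i * ln (p i) - p i * ln (q j)))"
    unfolding step1 step2 by (simp add: sum_subtractf algebra_simps)
  also have "\<dots> \<le> (\<Sum>i<d. \<Sum>j<d. B i j * (2 * (p i - sqrt (p i) * sqrt (q j)) + C * (sqrt (p i) - sqrt (q j))\<^sup>2))"
  proof (intro sum_mono mult_left_mono)
    fix i j assume i: "i \<in> {..<d}" and j: "j \<in> {..<d}"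
    show "p i * ln (p i) - p i * ln (q j) \<le> 2 * (p i - sqrt (p i) * sqrt (q j)) + C * (sqrt (p i) - sqrt (q j))\<^sup>2"
      unfolding C_def by (rule scalar_pq) (use i j p0 p1 q\<delta> \<delta> in auto)
    show "B i j \<ge> 0" using B0 i j by auto
  qed
  also have "\<dots> = (\<Sum>i<d. \<Sum>j<d. (2 + C) * (B i j * p i) + C * (B i j * q j) - (2 + 2 * C) * (B i j * (sqrt (p i) * sqrt (q j))))"
  proof (intro sum.cong refl)
    fix i j assume i: "i \<in> {..<d}" and j: "j \<in> {..<d}"
    have "(sqrt (p i))\<^sup>2 = p i" using p0 i by simp
    moreover have "(sqrt (q j))\<^sup>2 = q j" using q\<delta>[of j] \<delta> j by simp
    ultimately show "B i j * (2 * (p i - sqrt (p i) * sqrt (q j)) + C * (sqrt (p i) - sqrt (q j))\<^sup>2) =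
       (2 + C) * (B i j * p i) + C * (B i j * q j) - (2 + 2 * C) * (B i j * (sqrt (p i) * sqrt (q j)))"
      by (simp add: power2_eq_square algebra_simps)
  qed
  also have "\<dots> = (2 + C) * (\<Sum>i<d. \<Sum>j<d. B i j * p i) + C * (\<Sum>i<d. \<Sum>j<d. B i j * q j) - (2 + 2 * C) * G"
    by (simp add: G_def sum.distrib sum_subtractf sum_distrib_left)
  also have "(\<Sum>i<d. \<Sum>j<d. B i j * p i) = 1"
    using Brow psum by (simp add: sum_distrib_right[symmetric])
  also have "(\<Sum>i<d. \<Sum>j<d. B i j * q j) = 1"
  proof -
    have "(\<Sum>i<d. \<Sum>j<d. B i j * q j) = (\<Sum>j<d. (\<Sum>i<d. B i j) * q j)"
      by (subst sum.swap) (simp add: sum_distrib_right)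
    also have "\<dots> = (\<Sum>j<d. q j)" using Bcol by simp
    also have "\<dots> = (1 - 2*\<epsilon>) * (\<Sum>j<d. r j) + d * \<delta>" by (simp add: q_def sum.distrib sum_distrib_left)
    also have "\<dots> = 1" using rsum dpos by (simp add: \<delta>_def)
    finally show ?thesis .
  qed
  finally have kl: "(\<Sum>i<d. p i * ln (p i)) - (\<Sum>i<d. \<Sum>j<d. B i j * p i * ln (q j)) \<le> (2 + 2 * C) * (1 - G)"
    by (simp add: algebra_simps)
  have G1: "G \<ge> sqrt (1 - 2*\<epsilon>) * (\<Sum>i<d. \<Sum>j<d. B i j * sqrt (p i) * sqrt (r j))"
  proof -
    have "sqrt (1 - 2*\<epsilon>) * (\<Sum>i<d. \<Sum>j<d. B i j * sqrt (p i) * sqrt (r j))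
        = (\<Sum>i<d. \<Sum>j<d. B i j * (sqrt (p i) * sqrt ((1 - 2*\<epsilon>) * r j)))"
      unfolding real_sqrt_mult by (simp add: sum_distrib_left mult_ac)
    also have "\<dots> \<le> G" unfolding G_def
    proof (intro sum_mono mult_left_mono)
      fix i j assume i: "i \<in> {..<d}" and j: "j \<in> {..<d}"
      show "sqrt ((1 - 2*\<epsilon>) * r j) \<le> sqrt (q j)" using \<delta> by (simp add: q_def)
      show "sqrt (p i) \<ge> 0" using p0 i by simp
      show "B i j \<ge> 0" using B0 i j by auto
    qed
    finally show ?thesis .
  qed
  have e1: "sqrt (1 - 2*\<epsilon>) \<ge> 1 - 2*\<epsilon>"
  proof -
    have "0 \<le> 1 - 2*\<epsilon>" "1 - 2*\<epsilon> \<le> 1" using eps by auto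
    hence "(1 - 2*\<epsilon>) * (1 - 2*\<epsilon>) \<le> 1 - 2*\<epsilon>" by (simp add: mult_left_le)
    thus ?thesis using \<open>0 \<le> 1 - 2*\<epsilon>\<close> by (simp add: real_le_rsqrt power2_eq_square)
  qed
  have e2: "(1 - \<epsilon>)\<^sup>2 \<ge> 1 - 2*\<epsilon>" by (simp add: power2_eq_square algebra_simps)
  have "G \<ge> (1 - 2*\<epsilon>) * (1 - 2*\<epsilon>)"
  proof -
    have "(1 - 2*\<epsilon>) * (1 - 2*\<epsilon>) \<le> sqrt (1 - 2*\<epsilon>) * (1 - \<epsilon>)\<^sup>2"
      using e1 e2 eps by (intro mult_mono) auto
    also have "\<dots> \<le> sqrt (1 - 2*\<epsilon>) * (\<Sum>i<d. \<Sum>j<d. B i j * sqrt (p i) * sqrt (r j))"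
      using H eps by (intro mult_left_mono) auto
    finally show ?thesis using G1 by linarith
  qed
  hence G4: "1 - G \<le> 4 * \<epsilon>" by (simp add: algebra_simps power2_eq_square) (smt (verit) eps mult_nonneg_nonneg)
  have Cpos: "2 + 2 * C \<ge> 0" using lnd by (simp add: C_def)
  have "(2 + 2 * C) * (1 - G) \<le> (2 + 2 * C) * (4 * \<epsilon>)" using G4 Cpos by (intro mult_left_mono) auto
  also have "\<dots> = 16 * \<epsilon> * (2 + ln (real d / (2 * \<epsilon>)))"
  proof -
    have "ln (real d / (2 * \<epsilon>)) = - ln \<delta>" using eps dpos by (simp add: \<delta>_def ln_div)
    thus ?thesis by (simp add: C_def algebra_simps)
  qed
  finally show ?thesis using kl by (simp add: q_def \<delta>_def)
qed


lemma tn_classical: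
  fixes x y :: "nat \<Rightarrow> real" and M K :: "nat \<Rightarrow> nat \<Rightarrow> complex" and t :: real
  assumes x0: "\<forall>i<d. x i \<ge> 0" and y0: "\<forall>j<d. y j \<ge> 0"
    and xs: "(\<Sum>i<d. (x i)\<^sup>2) = 1" and ys: "(\<Sum>j<d. (y j)\<^sup>2) = 1"
    and Krow: "\<forall>j<d. (\<Sum>i<d. (cmod (K j i))\<^sup>2) \<le> 1"
    and Kcol: "\<forall>i<d. (\<Sum>j<d. (cmod (K j i))\<^sup>2) \<le> 1"
    and t: "t > 0"
  shows "Re (\<Sum>i<d. \<Sum>j<d. complex_of_real (x i * y j) * M i j * K j i)
     \<le> (t * (\<Sum>i<d. \<Sum>j<d. x i * y j * (cmod (M i j))\<^sup>2) + 1 / t) / 2"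
proof -
  have "Re (\<Sum>i<d. \<Sum>j<d. complex_of_real (x i * y j) * M i j * K j i)
      \<le> cmod (\<Sum>i<d. \<Sum>j<d. complex_of_real (x i * y j) * M i j * K j i)" by (rule complex_Re_le_cmod)
  also have "\<dots> \<le> (\<Sum>i<d. \<Sum>j<d. cmod (complex_of_real (x i * y j) * M i j * K j i))"
    by (rule order_trans[OF norm_sum sum_mono[OF norm_sum]])
  also have "\<dots> = (\<Sum>i<d. \<Sum>j<d. x i * y j * (cmod (M i j) * cmod (K j i)))"
    using x0 y0 by (intro sum.cong refl) (simp add: norm_mult abs_mult)
  also have "\<dots> \<le> (\<Sum>i<d. \<Sum>j<d. x i * y j * ((t * (cmod (M i j))\<^sup>2 + (cmod (K j i))\<^sup>2 / t) / 2))"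
  proof (intro sum_mono mult_left_mono)
    fix i j assume i: "i \<in> {..<d}" and j: "j \<in> {..<d}"
    show "x i * y j \<ge> 0" using x0 y0 i j by simp
    have "0 \<le> (t * cmod (M i j) - cmod (K j i))\<^sup>2" by simp
    hence "2 * t * (cmod (M i j) * cmod (K j i)) \<le> t\<^sup>2 * (cmod (M i j))\<^sup>2 + (cmod (K j i))\<^sup>2"
      by (simp add: power2_eq_square algebra_simps)
    thus "cmod (M i j) * cmod (K j i) \<le> (t * (cmod (M i j))\<^sup>2 + (cmod (K j i))\<^sup>2 / t) / 2"
      using t by (simp add: field_simps power2_eq_square)
  qed
  also have "\<dots> = t / 2 * (\<Sum>i<d. \<Sum>j<d. x i * y j * (cmod (M i j))\<^sup>2)
      + 1 / (2 * t) * (\<Sum>i<d. \<Sum>j<d. x i * y j * (cmod (K j i))\<^sup>2)"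
  proof -
    have "(\<Sum>i<d. \<Sum>j<d. x i * y j * ((t * (cmod (M i j))\<^sup>2 + (cmod (K j i))\<^sup>2 / t) / 2))
       = (\<Sum>i<d. \<Sum>j<d. t / 2 * (x i * y j * (cmod (M i j))\<^sup>2) + 1 / (2 * t) * (x i * y j * (cmod (K j i))\<^sup>2))"
      using t by (intro sum.cong refl) (simp add: field_simps)
    thus ?thesis by (simp only: sum.distrib sum_distrib_left)
  qed
  also have "(\<Sum>i<d. \<Sum>j<d. x i * y j * (cmod (K j i))\<^sup>2) \<le> 1"
  proof -
    have "(\<Sum>i<d. \<Sum>j<d. x i * y j * (cmod (K j i))\<^sup>2)
        \<le> (\<Sum>i<d. \<Sum>j<d. ((x i)\<^sup>2 / 2) * (cmod (K j i))\<^sup>2 + ((y j)\<^sup>2 / 2) * (cmod (K j i))\<^sup>2)"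
    proof (intro sum_mono)
      fix i j
      have "0 \<le> (x i - y j)\<^sup>2" by simp
      hence "x i * y j \<le> (x i)\<^sup>2 / 2 + (y j)\<^sup>2 / 2" by (simp add: power2_eq_square algebra_simps)
      hence "x i * y j * (cmod (K j i))\<^sup>2 \<le> ((x i)\<^sup>2 / 2 + (y j)\<^sup>2 / 2) * (cmod (K j i))\<^sup>2"
        by (intro mult_right_mono) auto
      thus "x i * y j * (cmod (K j i))\<^sup>2 \<le> ((x i)\<^sup>2 / 2) * (cmod (K j i))\<^sup>2 + ((y j)\<^sup>2 / 2) * (cmod (K j i))\<^sup>2"
        by (simp add: algebra_simps)
    qed
    also have "\<dots> = (\<Sum>i<d. (x i)\<^sup>2 / 2 * (\<Sum>j<d. (cmod (K j i))\<^sup>2)) + (\<Sum>j<d. (y j)\<^sup>2 / 2 * (\<Sum>i<d. (cmod (K j i))\<^sup>2))"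
      by (simp add: sum.distrib sum_distrib_left) (subst sum.swap, rule refl)
    also have "\<dots> \<le> (\<Sum>i<d. (x i)\<^sup>2 / 2 * 1) + (\<Sum>j<d. (y j)\<^sup>2 / 2 * 1)"
      using Krow Kcol by (intro add_mono sum_mono mult_left_mono) auto
    also have "\<dots> = 1" using xs ys by (simp add: sum_divide_distrib[symmetric])
    finally show ?thesis .
  qed
  hence "1 / (2 * t) * (\<Sum>i<d. \<Sum>j<d. x i * y j * (cmod (K j i))\<^sup>2) \<le> 1 / (2 * t) * 1"
    using t by (intro mult_left_mono) auto
  finally show ?thesis using t by (simp add: field_simps)
qed


lemma unit_cancel:
  assumes U: "unitary_mat n U" and X: "X \<in> carrier_mat n m"
  shows "mat_adjoint U * (U * X) = X" "U * (mat_adjoint U * X) = X"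
proof -
  note u = unitaryD[OF U]
  have "mat_adjoint U * (U * X) = (mat_adjoint U * U) * X" using u X by (intro assoc_mult_mat[symmetric]) auto
  thus "mat_adjoint U * (U * X) = X" using u X by simp
  have "U * (mat_adjoint U * X) = (U * mat_adjoint U) * X" using u X by (intro assoc_mult_mat[symmetric]) auto
  thus "U * (mat_adjoint U * X) = X" using u X by simp
qed

lemma unit_cancel_sq:
  assumes U: "unitary_mat n U" and X: "X \<in> carrier_mat n n"
  shows "mat_adjoint U * (U * X) = X" "U * (mat_adjoint U * X) = X"
  using unit_cancel[OF U X] by auto

lemma diag_mult: "diag_real n a * diag_real n b = diag_real n (\<lambda>k. a k * b k)"
  by (rule eq_matI) (auto simp: diag_mult_left[of _ n n])

lemma diag_mult_assoc: "X \<in> carrier_mat n m \<Longrightarrow> diag_real n a * (diag_real n b * X) = diag_real n (\<lambda>k. a k * b k) * X"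
  by (subst assoc_mult_mat[symmetric, of _ n n _ n _ m]) (auto simp: diag_mult)

lemma adj_diag: "mat_adjoint (diag_real n a) = diag_real n a"
  by (rule eq_matI) auto

lemma trace_diag: "mat_trace (diag_real n a) = complex_of_real (\<Sum>i<n. a i)"
  by (simp add: mat_trace_def)

lemma trace_gen: assumes M: "M \<in> carrier_mat n n" and N: "N \<in> carrier_mat n n"
  shows "mat_trace (diag_real n a * M * diag_real n b * N) =
    (\<Sum>i<n. \<Sum>j<n. complex_of_real (a i * b j) * M $$ (i,j) * N $$ (j,i))"
proof -
  have c1: "diag_real n a * M * diag_real n b \<in> carrier_mat n n" using M by auto
  have "mat_trace (diag_real n a * M * diag_real n b * N) =
     (\<Sum>i<n. \<Sum>j<n. (diag_real n a * M * diag_real n b) $$ (i,j) * N $$ (j,i))"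
    using M N by (simp add: mat_trace_def mult_index[OF c1 N])
  also have "\<dots> = (\<Sum>i<n. \<Sum>j<n. complex_of_real (a i * b j) * M $$ (i,j) * N $$ (j,i))"
  proof (intro sum.cong refl)
    fix i j assume "i \<in> {..<n}" "j \<in> {..<n}"
    hence ij: "i < n" "j < n" by auto
    have c0: "diag_real n a * M \<in> carrier_mat n n" using M by auto
    have "(diag_real n a * M * diag_real n b) $$ (i,j) = (diag_real n a * M) $$ (i,j) * complex_of_real (b j)"
      by (rule diag_mult_right[OF c0 ij])
    also have "(diag_real n a * M) $$ (i,j) = complex_of_real (a i) * M $$ (i,j)"
      by (rule diag_mult_left[OF M ij])
    finally show "(diag_real n a * M * diag_real n b) $$ (i,j) * N $$ (j,i) =
       complex_of_real (a i * b j) * M $$ (i,j) * N $$ (j,i)" by (simp add: algebra_simps)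
  qed
  finally show ?thesis .
qed

lemma diag_conj_entry: assumes N: "N \<in> carrier_mat n n" and j: "j < n"
  shows "(N * diag_real n a * mat_adjoint N) $$ (j,j) = complex_of_real (\<Sum>k<n. a k * (cmod (N $$ (j,k)))\<^sup>2)"
proof -
  have c0: "N * diag_real n a \<in> carrier_mat n n" using N by auto
  have "(N * diag_real n a * mat_adjoint N) $$ (j,j) = (\<Sum>k<n. (N * diag_real n a) $$ (j,k) * cnj (N $$ (j,k)))"
    using N j by (simp add: mult_index[OF c0 adj_carrier[OF N]])
  also have "\<dots> = (\<Sum>k<n. complex_of_real (a k * (cmod (N $$ (j,k)))\<^sup>2))"
  proof (intro sum.cong refl)
    fix k assume "k \<in> {..<n}"
    hence k: "k < n" by simp
    have "(N * diag_real n a) $$ (j,k) = N $$ (j,k) * complex_of_real (a k)" by (rule diag_mult_right[OF N j k])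
    moreover have "N $$ (j,k) * cnj (N $$ (j,k)) = complex_of_real ((cmod (N $$ (j,k)))\<^sup>2)"
      by (simp only: complex_norm_square)
    ultimately show "(N * diag_real n a) $$ (j,k) * cnj (N $$ (j,k)) = complex_of_real (a k * (cmod (N $$ (j,k)))\<^sup>2)"
      by (simp add: algebra_simps)
  qed
  also have "\<dots> = complex_of_real (\<Sum>k<n. a k * (cmod (N $$ (j,k)))\<^sup>2)" by simp
  finally show ?thesis .
qed

lemma decomp_diag: assumes U: "unitary_mat n U" and A: "A = U * diag_real n lam * mat_adjoint U"
  shows "mat_adjoint U * A * U = diag_real n lam"
proof -
  note u = unitaryD[OF U]
  show ?thesis unfolding A using u
    by (simp add: massoc[of _ n] msq adjsq unit_cancel_sq[OF U])
qed

lemma trace_decomp: assumes U: "unitary_mat n U"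
  shows "mat_trace (U * diag_real n lam * mat_adjoint U) = complex_of_real (\<Sum>i<n. lam i)"
proof -
  note u = unitaryD[OF U]
  have "mat_trace (U * (diag_real n lam * mat_adjoint U)) = mat_trace ((diag_real n lam * mat_adjoint U) * U)"
    using u by (intro mat_trace_comm) auto
  also have "(diag_real n lam * mat_adjoint U) * U = diag_real n lam" using u by (simp add: massoc[of _ n])
  finally show ?thesis using u by (simp add: massoc[of _ n] trace_diag)
qed

lemma trace_pair: assumes U: "unitary_mat n U" and W: "unitary_mat n W"
  shows "mat_trace (U * diag_real n a * mat_adjoint U * (W * diag_real n b * mat_adjoint W)) =
    (\<Sum>i<n. \<Sum>j<n. complex_of_real (a i * b j) * (mat_adjoint U * W) $$ (i,j) * (mat_adjoint W * U) $$ (j,i))"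
proof -
  note u = unitaryD[OF U] and w = unitaryD[OF W]
  have "mat_trace (U * diag_real n a * mat_adjoint U * (W * diag_real n b * mat_adjoint W))
      = mat_trace (U * (diag_real n a * (mat_adjoint U * (W * (diag_real n b * mat_adjoint W)))))"
    using u w by (simp add: massoc[of _ n] msq adjsq)
  also have "\<dots> = mat_trace ((diag_real n a * (mat_adjoint U * (W * (diag_real n b * mat_adjoint W)))) * U)"
    using u w by (intro mat_trace_comm) (auto simp: msq adjsq)
  also have "\<dots> = mat_trace (diag_real n a * (mat_adjoint U * W) * diag_real n b * (mat_adjoint W * U))"
    using u w by (simp add: massoc[of _ n] msq adjsq)
  also have "\<dots> = (\<Sum>i<n. \<Sum>j<n. complex_of_real (a i * b j) * (mat_adjoint U * W) $$ (i,j) * (mat_adjoint W * U) $$ (j,i))"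
    using u w by (intro trace_gen) (auto simp: msq adjsq)
  finally show ?thesis .
qed


lemma psd_eig_nonneg:
  assumes P: "psd_mat A" and A: "A \<in> carrier_mat n n" and U: "unitary_mat n U"
    and dec: "A = U * diag_real n lam * mat_adjoint U" and i: "i < n"
  shows "lam i \<ge> 0"
proof -
  note u = unitaryD[OF U]
  define v where "v = col U i"
  have v: "v \<in> carrier_vec n" using u(1) by (simp add: v_def carrier_vecI)
  have AU: "A * U \<in> carrier_mat n n" using A u(1) by simp
  have "(mat_adjoint U * A * U) $$ (i,i) = (mat_adjoint U * (A * U)) $$ (i,i)"
    using A u(1) by (simp add: massoc[of _ n])
  also have "\<dots> = (\<Sum>l<n. cnj (U $$ (l,i)) * (A * U) $$ (l,i))"
    using u(1) i by (simp add: mult_index[OF adj_carrier[OF u(1)] AU])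
  also have "\<dots> = conjugate v \<bullet> (A *\<^sub>v v)"
    using A u(1) i v by (auto simp: scalar_prod_def v_def index_mult_mat lessThan_atLeast0 intro!: sum.cong)
  finally have e: "(mat_adjoint U * A * U) $$ (i,i) = conjugate v \<bullet> (A *\<^sub>v v)" .
  have "(mat_adjoint U * A * U) $$ (i,i) = complex_of_real (lam i)"
    using decomp_diag[OF U dec] i by simp
  hence "lam i = Re (conjugate v \<bullet> (A *\<^sub>v v))" using e by (metis Re_complex_of_real)
  moreover have "Re (conjugate v \<bullet> (A *\<^sub>v v)) \<ge> 0" using P v A unfolding psd_mat_def by auto
  ultimately show ?thesis by simp
qed

lemma density_decomp:
  assumes D: "density_mat d \<rho>"
  shows "\<exists>U p. spectral_decomp \<rho> U p \<and> dim_row \<rho> = d \<and> unitary_mat d U \<and>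
     \<rho> = U * diag_real d p * mat_adjoint U \<and> (\<forall>i<d. p i \<ge> 0) \<and> (\<Sum>i<d. p i) = 1"
proof -
  have rc: "\<rho> \<in> carrier_mat d d" and P: "psd_mat \<rho>" and tr: "mat_trace \<rho> = 1"
    using D unfolding density_mat_def by auto
  have h: "hermitian_mat \<rho>" using P unfolding psd_mat_def by auto
  from spectral_decomp_exists[OF h] obtain U p where sd: "spectral_decomp \<rho> U p" by blast
  have dr: "dim_row \<rho> = d" using rc by simp
  have U: "unitary_mat d U" and dec: "\<rho> = U * diag_real d p * mat_adjoint U"
    using sd dr unfolding spectral_decomp_def by auto
  have pos: "\<forall>i<d. p i \<ge> 0" using psd_eig_nonneg[OF P rc U dec] by auto
  have "complex_of_real (\<Sum>i<d. p i) = 1" using tr trace_decomp[OF U, of p] dec by simp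
  hence "(\<Sum>i<d. p i) = 1" by (simp only: of_real_eq_1_iff)
  thus ?thesis using sd dr U dec pos by blast
qed


lemma tn_bound:
  assumes U: "unitary_mat n U" and W: "unitary_mat n W"
    and x0: "\<forall>i<n. x i \<ge> 0" and y0: "\<forall>j<n. y j \<ge> 0"
    and xs: "(\<Sum>i<n. (x i)\<^sup>2) = 1" and ys: "(\<Sum>j<n. (y j)\<^sup>2) = 1" and t: "t > 0"
  shows "trace_norm (U * diag_real n x * mat_adjoint U * (W * diag_real n y * mat_adjoint W))
    \<le> (t * (\<Sum>i<n. \<Sum>j<n. x i * y j * (cmod ((mat_adjoint U * W) $$ (i,j)))\<^sup>2) + 1 / t) / 2"
proof -
  note u = unitaryD[OF U] and w = unitaryD[OF W]
  define Aop where "Aop = U * diag_real n x * mat_adjoint U * (W * diag_real n y * mat_adjoint W)"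
  have Ac: "Aop \<in> carrier_mat n n" using u w by (simp add: Aop_def msq adjsq)
  define Gr where "Gr = mat_adjoint Aop * Aop"
  have Grc: "Gr \<in> carrier_mat n n" using Ac by (simp add: Gr_def msq adjsq)
  have hGr: "hermitian_mat Gr"
  proof -
    have "mat_adjoint Gr = mat_adjoint Aop * mat_adjoint (mat_adjoint Aop)"
      unfolding Gr_def using Ac by (intro adj_mult) auto
    moreover have "dim_row Gr = n" "dim_col Aop = n" using Grc Ac by auto
    ultimately show ?thesis unfolding hermitian_mat_def using Grc by (simp add: Gr_def)
  qed
  from spectral_decomp_exists[OF hGr] obtain V c where sd: "spectral_decomp Gr V c" by blast
  have dG: "dim_row Gr = n" using Grc by simp
  have V: "unitary_mat n V" and Gdec: "Gr = V * diag_real n c * mat_adjoint V"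
    using sd dG unfolding spectral_decomp_def by auto
  note v = unitaryD[OF V]
  have tn: "trace_norm Aop = (\<Sum>k<n. sqrt (c k))"
  proof -
    have "mat_sqrt Gr = V * diag_real n (sqrt \<circ> c) * mat_adjoint V" using mat_fun_eq[OF sd] dG by simp
    hence "mat_trace (mat_sqrt Gr) = complex_of_real (\<Sum>k<n. sqrt (c k))" using trace_decomp[OF V] by simp
    thus ?thesis unfolding trace_norm_def Gr_def[symmetric] by simp
  qed
  define Bm where "Bm = Aop * V"
  have Bc: "Bm \<in> carrier_mat n n" using Ac v(1) by (simp add: Bm_def)
  have aB: "mat_adjoint Bm = mat_adjoint V * mat_adjoint Aop" unfolding Bm_def by (rule adj_mult[OF Ac v(1)])
  have BB: "mat_adjoint Bm * Bm = diag_real n c"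
  proof -
    have "mat_adjoint Bm * Bm = mat_adjoint V * Gr * V"
      unfolding aB using Ac v(1) by (simp add: Bm_def Gr_def massoc[of _ n] msq adjsq)
    thus ?thesis using decomp_diag[OF V Gdec] by simp
  qed
  have c0: "c k \<ge> 0" if "k < n" for k
  proof -
    have "(mat_adjoint Bm * Bm) $$ (k,k) = (\<Sum>i<n. cnj (Bm $$ (i,k)) * Bm $$ (i,k))"
      using Bc that by (simp add: mult_index[OF adj_carrier[OF Bc] Bc])
    also have "\<dots> = complex_of_real (\<Sum>i<n. (cmod (Bm $$ (i,k)))\<^sup>2)"
      unfolding of_real_sum by (rule sum.cong) (simp_all only: complex_norm_square mult.commute)
    finally have "complex_of_real (c k) = complex_of_real (\<Sum>i<n. (cmod (Bm $$ (i,k)))\<^sup>2)"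
      using BB that by simp
    hence "c k = (\<Sum>i<n. (cmod (Bm $$ (i,k)))\<^sup>2)" by (simp only: of_real_eq_iff)
    thus ?thesis by (simp add: sum_nonneg)
  qed
  define g where "g k = (if c k > 0 then 1 / sqrt (c k) else 0)" for k
  define \<pi> where "\<pi> k = (if c k > 0 then 1 else (0::real))" for k
  define Gm where "Gm = Bm * diag_real n g"
  have Gc: "Gm \<in> carrier_mat n n" using Bc by (simp add: Gm_def)
  have aG: "mat_adjoint Gm = diag_real n g * mat_adjoint Bm" unfolding Gm_def
    using adj_mult[OF Bc diag_carrier] by (simp add: adj_diag)
  have gc: "diag_real n (\<lambda>k. g k * c k) = diag_real n (sqrt \<circ> c)"
  proof (rule eq_matI)
    fix i j assume "i < dim_row (diag_real n (sqrt \<circ> c))" "j < dim_col (diag_real n (sqrt \<circ> c))"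
    hence ij: "i < n" "j < n" by auto
    have "g i * c i = sqrt (c i)"
    proof (cases "c i > 0")
      case True thus ?thesis by (simp add: g_def field_simps real_div_sqrt)
    next
      case False hence "c i = 0" using c0[OF ij(1)] by simp
      thus ?thesis by (simp add: g_def)
    qed
    thus "diag_real n (\<lambda>k. g k * c k) $$ (i,j) = diag_real n (sqrt \<circ> c) $$ (i,j)" using ij by (cases "i = j") (simp_all flip: of_real_mult)
  qed auto
  have GB: "mat_adjoint Gm * Bm = diag_real n (sqrt \<circ> c)"
    unfolding aG using Bc by (simp add: massoc[of _ n] BB diag_mult gc)
  have gcg: "diag_real n (\<lambda>k. g k * c k * g k) = diag_real n \<pi>"
  proof (rule eq_matI)
    fix i j assume "i < dim_row (diag_real n \<pi>)" "j < dim_col (diag_real n \<pi>)"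
    hence ij: "i < n" "j < n" by auto
    have "g i * c i * g i = \<pi> i"
    proof (cases "c i > 0")
      case True thus ?thesis by (simp add: g_def \<pi>_def field_simps)
    next
      case False thus ?thesis by (simp add: g_def \<pi>_def)
    qed
    thus "diag_real n (\<lambda>k. g k * c k * g k) $$ (i,j) = diag_real n \<pi> $$ (i,j)" using ij by (cases "i = j") (simp_all flip: of_real_mult)
  qed auto
  have GG: "mat_adjoint Gm * Gm = diag_real n \<pi>"
  proof -
    have "mat_adjoint Gm * Gm = diag_real n g * (mat_adjoint Bm * Bm) * diag_real n g"
      unfolding aG using Bc by (simp add: Gm_def massoc[of _ n] msq adjsq)
    also have "\<dots> = diag_real n (\<lambda>k. g k * c k * g k)" unfolding BB by (simp add: diag_mult)
    finally show ?thesis using gcg by simp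
  qed
  have gpi: "diag_real n g * diag_real n \<pi> = diag_real n g"
  proof -
    have "(\<lambda>k. g k * \<pi> k) = g" by (rule ext) (simp add: g_def \<pi>_def)
    thus ?thesis by (simp add: diag_mult)
  qed
  have Gpi: "Gm * diag_real n \<pi> = Gm"
    using Bc by (simp add: Gm_def massoc[of _ n] gpi)
  have tsum: "(\<Sum>k<n. sqrt (c k)) = Re (mat_trace (mat_adjoint Gm * Bm))"
    unfolding GB by (simp add: trace_diag)
  define Z where "Z = V * mat_adjoint Gm"
  have Zc: "Z \<in> carrier_mat n n" using v(1) Gc by (simp add: Z_def msq adjsq)
  define M where "M = mat_adjoint U * W"
  define K where "K = mat_adjoint W * Z * U"
  have Mc: "M \<in> carrier_mat n n" using u w by (simp add: M_def msq adjsq)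
  have Kc: "K \<in> carrier_mat n n" using u w Zc by (simp add: K_def msq adjsq)
  note cs = u(1) w(1) v(1) Ac Bc Gc Zc Mc Kc
  have tr1: "mat_trace (mat_adjoint Gm * Bm) = mat_trace (diag_real n x * M * diag_real n y * K)"
  proof -
    have "mat_trace (mat_adjoint Gm * Bm) = mat_trace (mat_adjoint Gm * (Aop * V))" by (simp add: Bm_def)
    also have "\<dots> = mat_trace ((mat_adjoint Gm * Aop) * V)" using cs by (simp add: massoc[of _ n] msq adjsq)
    also have "\<dots> = mat_trace (V * (mat_adjoint Gm * Aop))" using cs by (intro mat_trace_comm) (auto simp: msq adjsq)
    also have "\<dots> = mat_trace (Z * Aop)" using cs by (simp add: Z_def massoc[of _ n] msq adjsq)
    also have "\<dots> = mat_trace (Aop * Z)" using cs by (intro mat_trace_comm) auto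
    also have "\<dots> = mat_trace (U * (diag_real n x * (mat_adjoint U * (W * (diag_real n y * (mat_adjoint W * Z))))))"
      unfolding Aop_def using cs by (simp add: massoc[of _ n] msq adjsq)
    also have "\<dots> = mat_trace ((diag_real n x * (mat_adjoint U * (W * (diag_real n y * (mat_adjoint W * Z))))) * U)"
      using cs by (intro mat_trace_comm) (auto simp: msq adjsq)
    also have "\<dots> = mat_trace (diag_real n x * M * diag_real n y * K)"
      unfolding M_def K_def using cs by (simp add: massoc[of _ n] msq adjsq)
    finally show ?thesis .
  qed
  have tr2: "mat_trace (diag_real n x * M * diag_real n y * K) =
     (\<Sum>i<n. \<Sum>j<n. complex_of_real (x i * y j) * M $$ (i,j) * K $$ (j,i))"
    by (rule trace_gen[OF Mc Kc])
  have KK1: "K * mat_adjoint K = (mat_adjoint W * V) * diag_real n \<pi> * mat_adjoint (mat_adjoint W * V)"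
  proof -
    have aK: "mat_adjoint K = mat_adjoint U * (mat_adjoint Z * W)"
      unfolding K_def using cs by (simp add: adj_mult[of _ n n _ n] msq adjsq massoc[of _ n])
    have aZ: "mat_adjoint Z = Gm * mat_adjoint V" unfolding Z_def using adj_mult[OF v(1) adjsq[OF Gc]] by simp
    have aWV: "mat_adjoint (mat_adjoint W * V) = mat_adjoint V * W" using adj_mult[OF adjsq[OF w(1)] v(1)] by simp
    have "K * mat_adjoint K = mat_adjoint W * (V * ((mat_adjoint Gm * Gm) * (mat_adjoint V * W)))"
      unfolding aK unfolding aZ using cs by (simp add: K_def Z_def massoc[of _ n] msq adjsq unit_cancel_sq[OF U])
    also have "\<dots> = (mat_adjoint W * V) * diag_real n \<pi> * mat_adjoint (mat_adjoint W * V)"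
      unfolding GG aWV using cs by (simp add: massoc[of _ n] msq adjsq)
    finally show ?thesis .
  qed
  have NV: "unitary_mat n (mat_adjoint W * V)" by (rule unitary_mult[OF unitary_adj[OF W] V])
  have Krow: "\<forall>j<n. (\<Sum>i<n. (cmod (K $$ (j,i)))\<^sup>2) \<le> 1"
  proof (intro allI impI)
    fix j assume j: "j < n"
    define N where "N = mat_adjoint W * V"
    have Nc: "N \<in> carrier_mat n n" using cs by (simp add: N_def msq adjsq)
    have "(K * mat_adjoint K) $$ (j,j) = (\<Sum>i<n. K $$ (j,i) * cnj (K $$ (j,i)))"
      using Kc j by (simp add: mult_index[OF Kc adj_carrier[OF Kc]])
    also have "\<dots> = complex_of_real (\<Sum>i<n. (cmod (K $$ (j,i)))\<^sup>2)"
      unfolding of_real_sum by (rule sum.cong) (simp_all only: complex_norm_square)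
    finally have e1: "(K * mat_adjoint K) $$ (j,j) = complex_of_real (\<Sum>i<n. (cmod (K $$ (j,i)))\<^sup>2)" .
    have e2: "(K * mat_adjoint K) $$ (j,j) = complex_of_real (\<Sum>k<n. \<pi> k * (cmod (N $$ (j,k)))\<^sup>2)"
      unfolding KK1 N_def[symmetric] by (rule diag_conj_entry[OF Nc j])
    have "(\<Sum>i<n. (cmod (K $$ (j,i)))\<^sup>2) = (\<Sum>k<n. \<pi> k * (cmod (N $$ (j,k)))\<^sup>2)"
      using e1 e2 by (metis of_real_eq_iff)
    also have "\<dots> \<le> (\<Sum>k<n. (cmod (N $$ (j,k)))\<^sup>2)"
      by (intro sum_mono) (simp add: \<pi>_def)
    also have "\<dots> = 1" unfolding N_def by (rule unitary_row_norm[OF NV j])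
    finally show "(\<Sum>i<n. (cmod (K $$ (j,i)))\<^sup>2) \<le> 1" .
  qed
  define Q where "Q = mat_adjoint U * (Gm * (mat_adjoint Gm * U))"
  have Qc: "Q \<in> carrier_mat n n" using cs by (simp add: Q_def msq adjsq)
  have KK2: "mat_adjoint K * K = Q"
  proof -
    have aK: "mat_adjoint K = mat_adjoint U * (mat_adjoint Z * W)"
      unfolding K_def using cs by (simp add: adj_mult[of _ n n _ n] msq adjsq massoc[of _ n])
    have aZ: "mat_adjoint Z = Gm * mat_adjoint V" unfolding Z_def using adj_mult[OF v(1) adjsq[OF Gc]] by simp
    show ?thesis
      unfolding aK unfolding aZ using cs by (simp add: K_def Z_def Q_def massoc[of _ n] msq adjsq unit_cancel_sq[OF W] unit_cancel_sq[OF V])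
  qed
  have QQ: "Q * Q = Q"
  proof -
    have "Q * Q = mat_adjoint U * (Gm * ((mat_adjoint Gm * Gm) * (mat_adjoint Gm * U)))"
      unfolding Q_def using cs by (simp add: massoc[of _ n] msq adjsq unit_cancel_sq[OF U])
    also have "\<dots> = mat_adjoint U * ((Gm * diag_real n \<pi>) * (mat_adjoint Gm * U))"
      unfolding GG using cs by (simp add: massoc[of _ n] msq adjsq)
    also have "\<dots> = Q" unfolding Gpi Q_def ..
    finally show ?thesis .
  qed
  have hQ: "mat_adjoint Q = Q"
    unfolding Q_def using cs by (simp add: adj_mult[of _ n n _ n] msq adjsq massoc[of _ n])
  have Kcol: "\<forall>i<n. (\<Sum>j<n. (cmod (K $$ (j,i)))\<^sup>2) \<le> 1"
  proof (intro allI impI)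
    fix i assume i: "i < n"
    have "(mat_adjoint K * K) $$ (i,i) = (\<Sum>j<n. cnj (K $$ (j,i)) * K $$ (j,i))"
      using Kc i by (simp add: mult_index[OF adj_carrier[OF Kc] Kc])
    also have "\<dots> = complex_of_real (\<Sum>j<n. (cmod (K $$ (j,i)))\<^sup>2)"
      unfolding of_real_sum by (rule sum.cong) (simp_all only: complex_norm_square mult.commute)
    finally have e1: "Q $$ (i,i) = complex_of_real (\<Sum>j<n. (cmod (K $$ (j,i)))\<^sup>2)" using KK2 by simp
    have "Q $$ (i,i) = (Q * Q) $$ (i,i)" using QQ by simp
    also have "\<dots> = (\<Sum>k<n. Q $$ (i,k) * Q $$ (k,i))" using i by (simp add: mult_index[OF Qc Qc])
    also have "\<dots> = (\<Sum>k<n. Q $$ (i,k) * cnj (Q $$ (i,k)))"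
    proof (rule sum.cong)
      fix k assume "k \<in> {..<n}"
      hence "Q $$ (k,i) = cnj (Q $$ (i,k))" using herm_entry[OF hQ Qc i, of k] by simp
      thus "Q $$ (i,k) * Q $$ (k,i) = Q $$ (i,k) * cnj (Q $$ (i,k))" by simp
    qed simp
    also have "\<dots> = complex_of_real (\<Sum>k<n. (cmod (Q $$ (i,k)))\<^sup>2)"
      unfolding of_real_sum by (rule sum.cong) (simp_all only: complex_norm_square)
    finally have e2: "Q $$ (i,i) = complex_of_real (\<Sum>k<n. (cmod (Q $$ (i,k)))\<^sup>2)" .
    define S where "S = (\<Sum>j<n. (cmod (K $$ (j,i)))\<^sup>2)"
    have S2: "S = (\<Sum>k<n. (cmod (Q $$ (i,k)))\<^sup>2)" using e1 e2 unfolding S_def by (metis of_real_eq_iff)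
    have "(cmod (Q $$ (i,i)))\<^sup>2 \<le> (\<Sum>k<n. (cmod (Q $$ (i,k)))\<^sup>2)"
      using i by (intro member_le_sum) auto
    moreover have S0: "S \<ge> 0" unfolding S_def by (simp add: sum_nonneg)
    moreover have "cmod (Q $$ (i,i)) = S"
    proof -
      have "Q $$ (i,i) = complex_of_real S" using e1 unfolding S_def .
      hence "cmod (Q $$ (i,i)) = \<bar>S\<bar>" by (simp only: norm_of_real)
      thus ?thesis using S0 by simp
    qed
    ultimately have "S\<^sup>2 \<le> S" using S2 by simp
    hence "S * S \<le> S * 1" by (simp add: power2_eq_square)
    hence "S \<le> 1" using S0 by (cases "S = 0") (auto simp: mult_le_cancel_left)
    thus "(\<Sum>j<n. (cmod (K $$ (j,i)))\<^sup>2) \<le> 1" by (simp add: S_def)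
  qed
  have "trace_norm Aop = Re (\<Sum>i<n. \<Sum>j<n. complex_of_real (x i * y j) * M $$ (i,j) * K $$ (j,i))"
    using tn tsum tr1 tr2 by simp
  also have "\<dots> \<le> (t * (\<Sum>i<n. \<Sum>j<n. x i * y j * (cmod (M $$ (i,j)))\<^sup>2) + 1 / t) / 2"
    by (rule tn_classical[OF x0 y0 xs ys Krow Kcol t])
  finally show ?thesis unfolding Aop_def M_def .
qed


lemma conj_entry: assumes N: "N \<in> carrier_mat n n" and ij: "i < n" "j < n"
  shows "(N * diag_real n a * mat_adjoint N) $$ (i,j) = (\<Sum>k<n. N $$ (i,k) * complex_of_real (a k) * cnj (N $$ (j,k)))"
proof -
  have c0: "N * diag_real n a \<in> carrier_mat n n" using N by auto
  have "(N * diag_real n a * mat_adjoint N) $$ (i,j) = (\<Sum>k<n. (N * diag_real n a) $$ (i,k) * cnj (N $$ (j,k)))"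
    using N ij by (simp add: mult_index[OF c0 adj_carrier[OF N]])
  also have "\<dots> = (\<Sum>k<n. N $$ (i,k) * complex_of_real (a k) * cnj (N $$ (j,k)))"
    using diag_mult_right[OF N ij(1)] by (intro sum.cong) auto
  finally show ?thesis .
qed

lemma depol_decomp:
  assumes W: "unitary_mat d W" and dec: "\<rho> = W * diag_real d r * mat_adjoint W"
  shows "depolarize d e \<rho> = W * diag_real d (\<lambda>j. (1 - e) * r j + e / real d) * mat_adjoint W"
proof -
  note w = unitaryD[OF W]
  show ?thesis
  proof (rule eq_matI)
    fix i j assume "i < dim_row (W * diag_real d (\<lambda>j. (1 - e) * r j + e / real d) * mat_adjoint W)"
      "j < dim_col (W * diag_real d (\<lambda>j. (1 - e) * r j + e / real d) * mat_adjoint W)"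
    hence ij: "i < d" "j < d" using w(1) by auto
    have one: "(W * diag_real d (\<lambda>_. 1) * mat_adjoint W) $$ (i,j) = (if i = j then 1 else 0)"
    proof -
      have "W * diag_real d (\<lambda>_. 1) = W" using w(1) by (intro eq_matI) (auto simp: diag_mult_right[OF w(1)])
      thus ?thesis using w(2) ij by simp
    qed
    have "depolarize d e \<rho> $$ (i,j) = complex_of_real (1 - e) * \<rho> $$ (i,j) + complex_of_real (e / real d) * (if i = j then 1 else 0)"
      using ij w(1) dec by (simp add: depolarize_def)
    also have "\<rho> $$ (i,j) = (\<Sum>k<d. W $$ (i,k) * complex_of_real (r k) * cnj (W $$ (j,k)))"
      unfolding dec by (rule conj_entry[OF w(1) ij])
    also have "(if i = j then 1 else 0) = (\<Sum>k<d. W $$ (i,k) * complex_of_real 1 * cnj (W $$ (j,k)))"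
      using one conj_entry[OF w(1) ij, of "\<lambda>_. 1"] by simp
    also have "complex_of_real (1 - e) * (\<Sum>k<d. W $$ (i,k) * complex_of_real (r k) * cnj (W $$ (j,k))) +
        complex_of_real (e / real d) * (\<Sum>k<d. W $$ (i,k) * complex_of_real 1 * cnj (W $$ (j,k)))
      = (\<Sum>k<d. W $$ (i,k) * complex_of_real ((1 - e) * r k + e / real d) * cnj (W $$ (j,k)))"
      by (simp add: sum_distrib_left sum.distrib[symmetric] algebra_simps)
    also have "\<dots> = (W * diag_real d (\<lambda>j. (1 - e) * r j + e / real d) * mat_adjoint W) $$ (i,j)"
      by (rule conj_entry[symmetric, OF w(1) ij])
    finally show "depolarize d e \<rho> $$ (i,j) = (W * diag_real d (\<lambda>j. (1 - e) * r j + e / real d) * mat_adjoint W) $$ (i,j)" .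
  qed (use w(1) dec in \<open>auto simp: depolarize_def\<close>)
qed


lemma prod_decomp: assumes U: "unitary_mat n U"
  shows "U * diag_real n a * mat_adjoint U * (U * diag_real n b * mat_adjoint U) = U * diag_real n (\<lambda>k. a k * b k) * mat_adjoint U"
proof -
  note u = unitaryD[OF U]
  show ?thesis using u by (simp add: massoc[of _ n] msq adjsq unit_cancel_sq[OF U] diag_mult_assoc[of _ n n])
qed

theorem theorem2p34:
  fixes d :: nat and \<rho> \<rho>hat :: "complex mat" and \<epsilon> :: real
  assumes "density_mat d \<rho>" and "density_mat d \<rho>hat"
    and "0 < \<epsilon>" and "\<epsilon> \<le> 1/2"
    and "1 - fidelity \<rho> \<rho>hat \<le> \<epsilon>"
  shows "kl_div \<rho> (depolarize d (2 * \<epsilon>) \<rho>hat) \<le> 16 * \<epsilon> * (2 + ln (real d / (2 * \<epsilon>)))"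
proof -
  note eps = assms(3,4)
  from density_decomp[OF assms(1)] obtain U p where sdU: "spectral_decomp \<rho> U p" and drU: "dim_row \<rho> = d"
    and U: "unitary_mat d U" and decU: "\<rho> = U * diag_real d p * mat_adjoint U"
    and p0: "\<forall>i<d. p i \<ge> 0" and ps: "(\<Sum>i<d. p i) = 1" by blast
  from density_decomp[OF assms(2)] obtain W r where sdW: "spectral_decomp \<rho>hat W r" and drW: "dim_row \<rho>hat = d"
    and W: "unitary_mat d W" and decW: "\<rho>hat = W * diag_real d r * mat_adjoint W"
    and r0: "\<forall>i<d. r i \<ge> 0" and rs: "(\<Sum>i<d. r i) = 1" by blast
  note u = unitaryD[OF U] and w = unitaryD[OF W]
  have d1: "d \<ge> 1" using ps by (cases d) auto
  define M where "M = mat_adjoint U * W"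
  have Mc: "M \<in> carrier_mat d d" using u w by (simp add: M_def msq adjsq)
  have MU: "unitary_mat d M" unfolding M_def by (rule unitary_mult[OF unitary_adj[OF U] W])
  define B where "B i j = (cmod (M $$ (i,j)))\<^sup>2" for i j
  have sq\<rho>: "mat_sqrt \<rho> = U * diag_real d (sqrt \<circ> p) * mat_adjoint U" using mat_fun_eq[OF sdU] drU by simp
  have sq\<rho>h: "mat_sqrt \<rho>hat = W * diag_real d (sqrt \<circ> r) * mat_adjoint W" using mat_fun_eq[OF sdW] drW by simp
  define H where "H = (\<Sum>i<d. \<Sum>j<d. (sqrt \<circ> p) i * (sqrt \<circ> r) j * (cmod (M $$ (i,j)))\<^sup>2)"
  have xs: "(\<Sum>i<d. ((sqrt \<circ> p) i)\<^sup>2) = 1" using p0 ps by simp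
  have ys: "(\<Sum>i<d. ((sqrt \<circ> r) i)\<^sup>2) = 1" using r0 rs by simp
  have t: "1 / (1 - \<epsilon>) > 0" using eps by simp
  have F: "fidelity \<rho> \<rho>hat \<le> (1 / (1 - \<epsilon>) * H + 1 / (1 / (1 - \<epsilon>))) / 2"
    unfolding fidelity_def sq\<rho> sq\<rho>h H_def M_def
    by (rule tn_bound[OF U W _ _ xs ys t]) (use p0 r0 in auto)
  have H1: "(1 - \<epsilon>)\<^sup>2 \<le> H"
  proof -
    have "1 - \<epsilon> \<le> (H / (1 - \<epsilon>) + (1 - \<epsilon>)) / 2" using F assms(5) by simp
    hence "2 * (1 - \<epsilon>) \<le> H / (1 - \<epsilon>) + (1 - \<epsilon>)" by simp
    hence "1 - \<epsilon> \<le> H / (1 - \<epsilon>)" by simp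
    thus ?thesis using eps by (simp add: le_divide_eq power2_eq_square)
  qed
  define q where "q j = (1 - 2 * \<epsilon>) * r j + 2 * \<epsilon> / real d" for j
  define \<sigma> where "\<sigma> = depolarize d (2 * \<epsilon>) \<rho>hat"
  have decS: "\<sigma> = W * diag_real d q * mat_adjoint W"
    unfolding \<sigma>_def q_def by (rule depol_decomp[OF W decW])
  have Sc: "\<sigma> \<in> carrier_mat d d" unfolding decS using w(1) by (simp add: msq adjsq)
  have dS: "dim_row \<sigma> = d" using Sc by simp
  have sdS: "spectral_decomp \<sigma> W q" unfolding spectral_decomp_def dS using Sc W decS by simp
  have ln\<sigma>: "mat_ln \<sigma> = W * diag_real d (ln \<circ> q) * mat_adjoint W" using mat_fun_eq[OF sdS] Sc by simp
  have ln\<rho>: "mat_ln \<rho> = U * diag_real d (ln \<circ> p) * mat_adjoint U" using mat_fun_eq[OF sdU] drU by simp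
  have \<rho>c: "\<rho> \<in> carrier_mat d d" unfolding decU using u(1) by (simp add: msq adjsq)
  have c1: "mat_ln \<rho> \<in> carrier_mat d d" unfolding ln\<rho> using u(1) by (simp add: msq adjsq)
  have c2: "mat_ln \<sigma> \<in> carrier_mat d d" unfolding ln\<sigma> using w(1) by (simp add: msq adjsq)
  have "mat_trace (\<rho> * (mat_ln \<rho> - mat_ln \<sigma>)) = mat_trace (\<rho> * mat_ln \<rho>) - mat_trace (\<rho> * mat_ln \<sigma>)"
    using \<rho>c c1 c2 by (simp add: mult_minus_distrib_mat[of _ d d] mat_trace_minus[of _ d])
  also have "mat_trace (\<rho> * mat_ln \<rho>) = complex_of_real (\<Sum>i<d. p i * ln (p i))"
    unfolding ln\<rho> using decU prod_decomp[OF U] trace_decomp[OF U] by simp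
  also have "mat_trace (\<rho> * mat_ln \<sigma>) = (\<Sum>i<d. \<Sum>j<d. complex_of_real (p i * (ln \<circ> q) j) * M $$ (i,j) * (mat_adjoint W * U) $$ (j,i))"
    unfolding ln\<sigma> decU M_def by (rule trace_pair[OF U W])
  also have "\<dots> = complex_of_real (\<Sum>i<d. \<Sum>j<d. B i j * p i * ln (q j))"
  proof -
    have aM: "mat_adjoint W * U = mat_adjoint M" unfolding M_def using adj_mult[OF adjsq[OF u(1)] w(1)] by simp
    have "(\<Sum>i<d. \<Sum>j<d. complex_of_real (p i * (ln \<circ> q) j) * M $$ (i,j) * (mat_adjoint W * U) $$ (j,i))
       = (\<Sum>i<d. \<Sum>j<d. complex_of_real (B i j * p i * ln (q j)))"
    proof (intro sum.cong refl)
      fix i j assume "i \<in> {..<d}" "j \<in> {..<d}"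
      hence ij: "i < d" "j < d" by auto
      have "(mat_adjoint W * U) $$ (j,i) = cnj (M $$ (i,j))" unfolding aM using Mc ij by simp
      moreover have "M $$ (i,j) * cnj (M $$ (i,j)) = complex_of_real (B i j)"
        unfolding B_def by (simp only: complex_norm_square)
      ultimately show "complex_of_real (p i * (ln \<circ> q) j) * M $$ (i,j) * (mat_adjoint W * U) $$ (j,i)
          = complex_of_real (B i j * p i * ln (q j))"
        by (simp add: algebra_simps)
    qed
    thus ?thesis by simp
  qed
  finally have kl: "kl_div \<rho> \<sigma> = (\<Sum>i<d. p i * ln (p i)) - (\<Sum>i<d. \<Sum>j<d. B i j * p i * ln (q j))"
    unfolding kl_div_def by simp
  have B0: "\<forall>i<d. \<forall>j<d. B i j \<ge> 0" by (simp add: B_def)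
  have Brow: "\<forall>i<d. (\<Sum>j<d. B i j) = 1" unfolding B_def using unitary_row_norm[OF MU] by simp
  have Bcol: "\<forall>j<d. (\<Sum>i<d. B i j) = 1" unfolding B_def using unitary_col_norm[OF MU] by simp
  have HB: "(1 - \<epsilon>)\<^sup>2 \<le> (\<Sum>i<d. \<Sum>j<d. B i j * sqrt (p i) * sqrt (r j))"
    using H1 unfolding H_def B_def by (simp add: mult_ac)
  have "(\<Sum>i<d. p i * ln (p i)) - (\<Sum>i<d. \<Sum>j<d. B i j * p i * ln ((1 - 2*\<epsilon>) * r j + 2*\<epsilon>/d))
     \<le> 16 * \<epsilon> * (2 + ln (real d / (2 * \<epsilon>)))"
    by (rule classical_final[OF d1 eps p0 ps r0 rs B0 Brow Bcol HB])
  thus ?thesis using kl unfolding \<sigma>_def q_def by simp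
qed


end
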